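(* For any complexity classes $\mathsf{B}$ and $\mathsf{C}$, $\mathsf{C/poly^B}\subseteq \mathsf{P^{C,\,Un(P^B)}}$.
   Context: $\mathsf{Un(D)}$ denotes the set of unary languages (all elements of the form $1^m$) in class $\mathsf{D}$; $\mathsf{X^Y}=\bigcup_{L\in\mathsf{Y}}\mathsf{X}^L$; a double oracle class is $\mathsf{D^{E,F}}=\bigcup_{L_E\in\mathsf{E},L_F\in\mathsf{F}}\mathsf{D}^{L_E,L_F}$, i.e. a $\mathsf{D}$ machine with oracle access to one language from $\mathsf{E}$ and one from $\mathsf{F}$. $\#$ is a separator symbol. (Bounded advice) A language $L$ is in $\mathsf{C/poly^B}$ if there is a sequence of advice strings $\{a_n\}_{n\in\mathbb N}$ such that (i) there is a deterministic polynomial-time Turing machine $T$ with oracle access to a language in $\mathsf{B}$ which on input $1^n$ halts in $\mathrm{poly}(n)$ time with $a_n$ as the final content of its tape, and (ii) the language $\{x\#a_{|x|}: x\in L\}$ is in $\mathsf{C}$. *)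

theory Defs
  imports Main
begin

datatype sym = Blank | S0 | S1 | Hash

type_synonym lang = "sym list set"

definition nonblank :: "sym list \<Rightarrow> bool" where
  "nonblank w \<longleftrightarrow> Blank \<notin> set w"

definition binary :: "sym list \<Rightarrow> bool" where
  "binary w \<longleftrightarrow> set w \<subseteq> {S0, S1}"

text \<open>A machine has a work tape (holding the input initially, and the output
  at the end) and an oracle query tape.  States are natural numbers, 0 is the start state, and a machine
  uses only finitely many states (see wf_otm).  An action
  Ask j qy qn queries oracle number j on the current contents of the query
  tape, then erases the query tape and continues in state qy (answer yes) or
  qn (answer no).  Stop b halts, accepting iff b.\<close>

datatype dir = Lft | Rgt | Stay

datatype action =
    Move nat sym dir sym dir
  | Ask nat nat nat
  | Stop bool

type_synonym otm = "nat \<Rightarrow> sym \<Rightarrow> sym \<Rightarrow> action"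

type_synonym conf = "nat \<times> (int \<Rightarrow> sym) \<times> int \<times> (int \<Rightarrow> sym) \<times> int"

fun targets :: "action \<Rightarrow> nat set" where
  "targets (Move q s1 d1 s2 d2) = {q}"
| "targets (Ask j qy qn) = {qy, qn}"
| "targets (Stop b) = {}"

definition wf_otm :: "nat \<Rightarrow> otm \<Rightarrow> bool" where
  "wf_otm N M \<longleftrightarrow> 0 < N \<and> (\<forall>q<N. \<forall>a b. \<forall>q'\<in>targets (M q a b). q' < N)"

fun mv :: "dir \<Rightarrow> int \<Rightarrow> int" where
  "mv Lft h = h - 1"
| "mv Rgt h = h + 1"
| "mv Stay h = h"

definition content :: "(int \<Rightarrow> sym) \<Rightarrow> sym list" where
  "content t = map (\<lambda>i. t (int i)) [0..<(LEAST n. t (int n) = Blank)]"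

definition init_tape :: "sym list \<Rightarrow> int \<Rightarrow> sym" where
  "init_tape x i = (if 0 \<le> i \<and> nat i < length x then x ! nat i else Blank)"

fun step :: "(nat \<Rightarrow> lang) \<Rightarrow> otm \<Rightarrow> conf \<Rightarrow> conf" where
  "step Or M (q, t1, h1, t2, h2) =
     (case M q (t1 h1) (t2 h2) of
        Move q' s1 d1 s2 d2 \<Rightarrow> (q', t1(h1 := s1), mv d1 h1, t2(h2 := s2), mv d2 h2)
      | Ask j qy qn \<Rightarrow> ((if content t2 \<in> Or j then qy else qn), t1, h1, (\<lambda>_. Blank), 0)
      | Stop b \<Rightarrow> (q, t1, h1, t2, h2))"

fun stop_of :: "otm \<Rightarrow> conf \<Rightarrow> bool option" where
  "stop_of M (q, t1, h1, t2, h2) =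
     (case M q (t1 h1) (t2 h2) of Stop b \<Rightarrow> Some b | _ \<Rightarrow> None)"

fun work_tape :: "conf \<Rightarrow> int \<Rightarrow> sym" where
  "work_tape (q, t1, h1, t2, h2) = t1"

definition run :: "(nat \<Rightarrow> lang) \<Rightarrow> otm \<Rightarrow> sym list \<Rightarrow> nat \<Rightarrow> conf" where
  "run Or M x n = (step Or M ^^ n) (0, init_tape x, 0, (\<lambda>_. Blank), 0)"

definition decides_in :: "(nat \<Rightarrow> lang) \<Rightarrow> otm \<Rightarrow> nat \<Rightarrow> lang \<Rightarrow> bool" where
  "decides_in Or M k L \<longleftrightarrow>
     (\<forall>x. nonblank x \<longrightarrow>
        (\<exists>n \<le> (length x + 2) ^ k. stop_of M (run Or M x n) = Some (x \<in> L)))"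

definition computes_advice_in :: "(nat \<Rightarrow> lang) \<Rightarrow> otm \<Rightarrow> nat \<Rightarrow> (nat \<Rightarrow> sym list) \<Rightarrow> bool" where
  "computes_advice_in Or M k a \<longleftrightarrow>
     (\<forall>n. \<exists>t \<le> (n + 2) ^ k.
        stop_of M (run Or M (replicate n S1) t) \<noteq> None \<and>
        content (work_tape (run Or M (replicate n S1) t)) = a n)"

definition P_oracle :: "(nat \<Rightarrow> lang) \<Rightarrow> lang \<Rightarrow> bool" where
  "P_oracle Or L \<longleftrightarrow> (\<forall>w\<in>L. nonblank w) \<and>
     (\<exists>M N k. wf_otm N M \<and> decides_in Or M k L)"

text \<open>A complexity class is an arbitrary set of languages.\<close>

definition Unary :: "lang set \<Rightarrow> lang set" where
  "Unary D = {L \<in> D. \<forall>w\<in>L. \<exists>m. w = replicate m S1}"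

definition P_rel :: "lang set \<Rightarrow> lang set" where
  "P_rel B = {L. \<exists>LB\<in>B. P_oracle (\<lambda>_. LB) L}"

definition P_rel2 :: "lang set \<Rightarrow> lang set \<Rightarrow> lang set" where
  "P_rel2 E F = {L. \<exists>LE\<in>E. \<exists>LF\<in>F.
      P_oracle (\<lambda>j. if j = 0 then LE else if j = 1 then LF else {}) L}"

definition Cpoly :: "lang set \<Rightarrow> lang set \<Rightarrow> lang set" where
  "Cpoly C B = {L. (\<forall>x\<in>L. binary x) \<and>
      (\<exists>a :: nat \<Rightarrow> sym list.
         (\<exists>LB\<in>B. \<exists>M N k. wf_otm N M \<and> computes_advice_in (\<lambda>_. LB) M k a) \<and>
         {x @ Hash # a (length x) | x. x \<in> L} \<in> C)}"

end

theory Submission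
  imports Defs
begin


datatype 's act = Mv 's sym dir sym dir | Ak nat 's 's | St bool

type_synonym 's cfg = "'s \<times> (int \<Rightarrow> sym) \<times> int \<times> (int \<Rightarrow> sym) \<times> int"

fun stp :: "(nat \<Rightarrow> lang) \<Rightarrow> ('s \<Rightarrow> sym \<Rightarrow> sym \<Rightarrow> 's act) \<Rightarrow> 's cfg \<Rightarrow> 's cfg" where
  "stp Or M (q, t1, h1, t2, h2) =
     (case M q (t1 h1) (t2 h2) of
        Mv q' s1 d1 s2 d2 \<Rightarrow> (q', t1(h1 := s1), mv d1 h1, t2(h2 := s2), mv d2 h2)
      | Ak j qy qn \<Rightarrow> ((if content t2 \<in> Or j then qy else qn), t1, h1, (\<lambda>_. Blank), 0)
      | St b \<Rightarrow> (q, t1, h1, t2, h2))"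

declare stp.simps[simp del]

fun stopd :: "('s \<Rightarrow> sym \<Rightarrow> sym \<Rightarrow> 's act) \<Rightarrow> 's cfg \<Rightarrow> bool option" where
  "stopd M (q, t1, h1, t2, h2) = (case M q (t1 h1) (t2 h2) of St b \<Rightarrow> Some b | _ \<Rightarrow> None)"

definition reach :: "(nat \<Rightarrow> lang) \<Rightarrow> ('s \<Rightarrow> sym \<Rightarrow> sym \<Rightarrow> 's act) \<Rightarrow> 's cfg \<Rightarrow> 's cfg \<Rightarrow> nat \<Rightarrow> bool" where
  "reach Or M c c' n \<longleftrightarrow> (\<exists>t\<le>n. (stp Or M ^^ t) c = c')"

lemma reach_refl: "reach Or M c c n"
  unfolding reach_def by (rule exI[of _ 0]) auto

lemma reach_trans: "reach Or M c1 c2 n1 \<Longrightarrow> reach Or M c2 c3 n2 \<Longrightarrow> reach Or M c1 c3 (n1 + n2)"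
proof -
  assume "reach Or M c1 c2 n1" "reach Or M c2 c3 n2"
  then obtain t1 t2 where t: "t1 \<le> n1" "(stp Or M ^^ t1) c1 = c2" "t2 \<le> n2" "(stp Or M ^^ t2) c2 = c3"
    unfolding reach_def by blast
  have "(stp Or M ^^ (t2 + t1)) c1 = c3" using t by (simp add: funpow_add)
  moreover have "t2 + t1 \<le> n1 + n2" using t by simp
  ultimately show ?thesis unfolding reach_def by blast
qed

lemma reach_mono: "reach Or M c1 c2 n1 \<Longrightarrow> n1 \<le> n2 \<Longrightarrow> reach Or M c1 c2 n2"
  unfolding reach_def using order_trans by blast

lemma reach_step: "stp Or M c1 = c2 \<Longrightarrow> reach Or M c2 c3 n \<Longrightarrow> reach Or M c1 c3 (Suc n)"
proof -
  assume a: "stp Or M c1 = c2" "reach Or M c2 c3 n"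
  then obtain t where t: "t \<le> n" "(stp Or M ^^ t) c2 = c3" unfolding reach_def by blast
  have "(stp Or M ^^ (t + 1)) c1 = c3" using t a(1) by (simp add: funpow_add funpow_swap1)
  then show ?thesis unfolding reach_def using t(1) by (intro exI[of _ "t+1"]) simp
qed

lemma reach_stepI: "reach Or M (stp Or M c1) c3 n \<Longrightarrow> reach Or M c1 c3 (Suc n)"
  by (rule reach_step[OF refl])

lemma reach_step1: "stp Or M c1 = c2 \<Longrightarrow> reach Or M c1 c2 1"
  using reach_step[of Or M c1 c2 c2 0] reach_refl[of Or M c2 0] by simp

lemma reach_trans': "reach Or M c1 c2 n1 \<Longrightarrow> reach Or M c2 c3 n2 \<Longrightarrow> n1 + n2 \<le> n \<Longrightarrow> reach Or M c1 c3 n"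
  using reach_trans reach_mono by blast

lemma stp_Mv: "M q (t1 h1) (t2 h2) = Mv q' s1 d1 s2 d2 \<Longrightarrow>
   stp Or M (q, t1, h1, t2, h2) = (q', t1(h1 := s1), mv d1 h1, t2(h2 := s2), mv d2 h2)"
  by (simp add: stp.simps)

lemma stp_Ak: "M q (t1 h1) (t2 h2) = Ak j qy qn \<Longrightarrow>
   stp Or M (q, t1, h1, t2, h2) = ((if content t2 \<in> Or j then qy else qn), t1, h1, (\<lambda>_. Blank), 0)"
  by (simp add: stp.simps)

lemma stp_St: "M q (t1 h1) (t2 h2) = St b \<Longrightarrow> stp Or M (q, t1, h1, t2, h2) = (q, t1, h1, t2, h2)"
  by (simp add: stp.simps)

lemma stopd_St: "M q (t1 h1) (t2 h2) = St b \<Longrightarrow> stopd M (q, t1, h1, t2, h2) = Some b"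
  by simp

section \<open>Lifting to natural-number states\<close>

fun mapact :: "('s \<Rightarrow> nat) \<Rightarrow> 's act \<Rightarrow> action" where
  "mapact e (Mv q s1 d1 s2 d2) = Move (e q) s1 d1 s2 d2"
| "mapact e (Ak j x y) = Ask j (e x) (e y)"
| "mapact e (St b) = Stop b"

fun tgd :: "'s act \<Rightarrow> 's set" where
  "tgd (Mv q s1 d1 s2 d2) = {q}"
| "tgd (Ak j x y) = {x, y}"
| "tgd (St b) = {}"

definition liftm :: "'s set \<Rightarrow> ('s \<Rightarrow> nat) \<Rightarrow> ('s \<Rightarrow> sym \<Rightarrow> sym \<Rightarrow> 's act) \<Rightarrow> otm" where
  "liftm V e M q a b = (if q \<in> e ` V then mapact e (M (inv_into V e q) a b) else Stop False)"

fun emap :: "('s \<Rightarrow> nat) \<Rightarrow> 's cfg \<Rightarrow> conf" where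
  "emap e (q, r) = (e q, r)"

lemma lift_at: "inj_on e V \<Longrightarrow> q \<in> V \<Longrightarrow> liftm V e M (e q) a b = mapact e (M q a b)"
  unfolding liftm_def by auto

lemma lift_step:
  assumes "inj_on e V" "fst c \<in> V"
  shows "step Or (liftm V e M) (emap e c) = emap e (stp Or M c)"
proof -
  obtain q t1 h1 t2 h2 where c: "c = (q, t1, h1, t2, h2)" by (cases c) auto
  have q: "q \<in> V" using assms c by auto
  show ?thesis unfolding c using lift_at[OF assms(1) q, of M]
    by (cases "M q (t1 h1) (t2 h2)") (auto simp: stp.simps)
qed

lemma lift_stop:
  assumes "inj_on e V" "fst c \<in> V"
  shows "stop_of (liftm V e M) (emap e c) = stopd M c"
proof -
  obtain q t1 h1 t2 h2 where c: "c = (q, t1, h1, t2, h2)" by (cases c) auto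
  have q: "q \<in> V" using assms c by auto
  show ?thesis unfolding c using lift_at[OF assms(1) q, of M]
    by (cases "M q (t1 h1) (t2 h2)") auto
qed

lemma stp_closed:
  assumes "\<forall>s\<in>V. \<forall>a b. tgd (M s a b) \<subseteq> V" "fst c \<in> V"
  shows "fst (stp Or M c) \<in> V"
proof -
  obtain q t1 h1 t2 h2 where c: "c = (q, t1, h1, t2, h2)" by (cases c) auto
  have q: "q \<in> V" using assms c by auto
  have "tgd (M q (t1 h1) (t2 h2)) \<subseteq> V" using assms(1) q by blast
  then show ?thesis unfolding c using q
    by (cases "M q (t1 h1) (t2 h2)") (auto simp: stp.simps)
qed

lemma stp_closed_pow:
  assumes "\<forall>s\<in>V. \<forall>a b. tgd (M s a b) \<subseteq> V" "fst c \<in> V"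
  shows "fst ((stp Or M ^^ n) c) \<in> V"
  using assms(2) by (induction n) (auto intro: stp_closed[OF assms(1)])

lemma lift_pow:
  assumes "inj_on e V" "\<forall>s\<in>V. \<forall>a b. tgd (M s a b) \<subseteq> V" "fst c \<in> V"
  shows "(step Or (liftm V e M) ^^ n) (emap e c) = emap e ((stp Or M ^^ n) c)"
proof (induction n)
  case 0 then show ?case by simp
next
  case (Suc n)
  have "fst ((stp Or M ^^ n) c) \<in> V" by (rule stp_closed_pow[OF assms(2,3)])
  then show ?case using Suc lift_step[OF assms(1)] by simp
qed

lemma lift_wf:
  assumes "inj_on e V" "finite V" "\<forall>s\<in>V. \<forall>a b. tgd (M s a b) \<subseteq> V"
  shows "wf_otm (Suc (Max (e ` V))) (liftm V e M)"
  unfolding wf_otm_def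
proof (intro conjI allI impI ballI)
  fix q a b q'
  assume q: "q < Suc (Max (e ` V))" and q': "q' \<in> targets (liftm V e M q a b)"
  show "q' < Suc (Max (e ` V))"
  proof (cases "q \<in> e ` V")
    case True
    then obtain s where s: "s \<in> V" "q = e s" by auto
    have "liftm V e M q a b = mapact e (M s a b)" using lift_at[OF assms(1) s(1)] s by simp
    then have "q' \<in> e ` tgd (M s a b)" using q' by (cases "M s a b") auto
    then obtain s' where s': "s' \<in> tgd (M s a b)" "q' = e s'" by blast
    have "s' \<in> V" using s' assms(3) s by blast
    then have "e s' \<le> Max (e ` V)" using assms(2) by simp
    then show ?thesis using s' by simp
  next
    case False then show ?thesis using q' unfolding liftm_def by simp
  qed
qed simp

lemma exists_enc:
  assumes "finite (V :: 's set)" "s0 \<in> V"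
  shows "\<exists>e::'s \<Rightarrow> nat. inj_on e V \<and> e s0 = 0"
proof -
  obtain f :: "'s \<Rightarrow> nat" and n where f: "inj_on f V" using finite_imp_inj_to_nat_seg[OF assms(1)] by blast
  define e where "e s = (if s = s0 then 0 else Suc (f s))" for s
  have "inj_on e V" using f unfolding e_def inj_on_def by auto
  moreover have "e s0 = 0" unfolding e_def by simp
  ultimately show ?thesis by blast
qed

definition initc :: "'s \<Rightarrow> sym list \<Rightarrow> 's cfg" where
  "initc s0 x = (s0, init_tape x, 0, (\<lambda>_. Blank), 0)"

theorem P_from_dt:
  fixes M :: "'s \<Rightarrow> sym \<Rightarrow> sym \<Rightarrow> 's act"
  assumes fin: "finite V" and sA: "sA \<in> V" and cl: "\<forall>s\<in>V. \<forall>a b. tgd (M s a b) \<subseteq> V"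
    and dec: "\<forall>x. nonblank x \<longrightarrow> (\<exists>r. reach Or M (initc sA x) r ((length x + 2) ^ k) \<and> stopd M r = Some (x \<in> L))"
  shows "\<exists>Mn N. wf_otm N Mn \<and> decides_in Or Mn k L"
proof -
  obtain e :: "'s \<Rightarrow> nat" where e: "inj_on e V" "e sA = 0" using exists_enc[OF fin sA] by blast
  have "decides_in Or (liftm V e M) k L"
    unfolding decides_in_def
  proof (intro allI impI)
    fix x :: "sym list" assume x: "nonblank x"
    obtain r t where t: "t \<le> (length x + 2) ^ k" "(stp Or M ^^ t) (initc sA x) = r" "stopd M r = Some (x \<in> L)"
      using dec x unfolding reach_def by blast
    have i: "emap e (initc sA x) = (0, init_tape x, 0, (\<lambda>_. Blank), 0)" using e unfolding initc_def by simp
    have "fst (initc sA x) \<in> V" using sA unfolding initc_def by simp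
    then have "run Or (liftm V e M) x t = emap e r"
      unfolding run_def using lift_pow[OF e(1) cl] i t(2) by metis
    moreover have "fst r \<in> V" using stp_closed_pow[OF cl \<open>fst (initc sA x) \<in> V\<close>] t(2) by blast
    ultimately have "stop_of (liftm V e M) (run Or (liftm V e M) x t) = Some (x \<in> L)"
      using lift_stop[OF e(1)] t(3) by simp
    then show "\<exists>n\<le>(length x + 2) ^ k. stop_of (liftm V e M) (run Or (liftm V e M) x n) = Some (x \<in> L)"
      using t(1) by blast
  qed
  then show ?thesis using lift_wf[OF e(1) fin cl] by blast
qed


fun dsg :: "dir \<Rightarrow> int" where
  "dsg Lft = -1" | "dsg Rgt = 1" | "dsg Stay = 0"

lemma mv_dsg: "mv d h = h + dsg d"
  by (cases d) auto

lemma stp_keep: "M q (t1 h1) (t2 h2) = Mv q' (t1 h1) d (t2 h2) Stay \<Longrightarrow>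
   stp Or M (q, t1, h1, t2, h2) = (q', t1, h1 + dsg d, t2, h2)"
  by (simp add: stp_Mv mv_dsg)

lemma walk1:
  assumes X: "\<And>a c. a \<in> A \<Longrightarrow> M X a c = Mv X a d c Stay"
    and cells: "\<And>j. j < k \<Longrightarrow> t1 (h + dsg d * int j) \<in> A"
  shows "reach Or M (X, t1, h, t2, h2) (X, t1, h + dsg d * int k, t2, h2) k"
  using cells
proof (induction k)
  case 0
  then show ?case by (simp add: reach_refl)
next
  case (Suc k)
  then have IH: "reach Or M (X, t1, h, t2, h2) (X, t1, h + dsg d * int k, t2, h2) k" by simp
  have "t1 (h + dsg d * int k) \<in> A" using Suc.prems by simp
  then have "stp Or M (X, t1, h + dsg d * int k, t2, h2) = (X, t1, h + dsg d * int k + dsg d, t2, h2)"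
    using X by (intro stp_keep) simp
  then have "stp Or M (X, t1, h + dsg d * int k, t2, h2) = (X, t1, h + dsg d * int (Suc k), t2, h2)"
    by (simp add: algebra_simps)
  then have "reach Or M (X, t1, h + dsg d * int k, t2, h2) (X, t1, h + dsg d * int (Suc k), t2, h2) 1"
    by (rule reach_step1)
  from reach_trans[OF IH this] show ?case by simp
qed

lemma walk2:
  assumes X: "\<And>a c. a \<in> A \<Longrightarrow> M X a c = Mv Y a d c Stay"
    and Y: "\<And>a c. M Y a c = Mv X a d c Stay"
    and cells: "\<And>j. j < k \<Longrightarrow> t1 (h + 2 * dsg d * int j) \<in> A"
  shows "reach Or M (X, t1, h, t2, h2) (X, t1, h + 2 * dsg d * int k, t2, h2) (2 * k)"
  using cells
proof (induction k)
  case 0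
  then show ?case by (simp add: reach_refl)
next
  case (Suc k)
  then have IH: "reach Or M (X, t1, h, t2, h2) (X, t1, h + 2 * dsg d * int k, t2, h2) (2 * k)" by simp
  have "t1 (h + 2 * dsg d * int k) \<in> A" using Suc.prems by simp
  then have s1: "stp Or M (X, t1, h + 2 * dsg d * int k, t2, h2) = (Y, t1, h + 2 * dsg d * int k + dsg d, t2, h2)"
    using X by (intro stp_keep) simp
  have s2': "stp Or M (Y, t1, h + 2 * dsg d * int k + dsg d, t2, h2) = (X, t1, h + 2 * dsg d * int k + dsg d + dsg d, t2, h2)"
    using Y by (intro stp_keep) simp
  have s2: "stp Or M (Y, t1, h + 2 * dsg d * int k + dsg d, t2, h2) = (X, t1, h + 2 * dsg d * int (Suc k), t2, h2)"
    using s2' by (simp add: algebra_simps)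
  have "reach Or M (X, t1, h + 2 * dsg d * int k, t2, h2) (X, t1, h + 2 * dsg d * int (Suc k), t2, h2) (Suc 1)"
    by (rule reach_step[OF s1 reach_step1[OF s2]])
  from reach_trans[OF IH this] show ?case by simp
qed

lemma content_eq:
  assumes "\<And>j. j < length w \<Longrightarrow> t (int j) = w ! j" "t (int (length w)) = Blank" "Blank \<notin> set w"
  shows "content t = w"
proof -
  have L: "(LEAST n. t (int n) = Blank) = length w"
  proof (rule Least_equality)
    show "t (int (length w)) = Blank" by fact
  next
    fix y assume y: "t (int y) = Blank"
    show "length w \<le> y"
    proof (rule ccontr)
      assume "\<not> length w \<le> y"
      then have "y < length w" by simp
      then have "w ! y = Blank" using assms(1) y by simp
      then show False using \<open>y < length w\<close> assms(3) nth_mem by fastforce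
    qed
  qed
  show ?thesis unfolding content_def L
    by (rule nth_equalityI) (auto simp: assms(1))
qed

lemma content_blank: "content (\<lambda>_. Blank) = []"
  by (rule content_eq) auto

lemma init_tape_nat: "init_tape x (int j) = (if j < length x then x ! j else Blank)"
  unfolding init_tape_def by simp

lemma content_init: "nonblank x \<Longrightarrow> content (init_tape x) = x"
  by (rule content_eq) (auto simp: init_tape_nat nonblank_def)

section \<open>Double-track layout\<close>

definition dbl :: "int \<Rightarrow> (int \<Rightarrow> sym) \<Rightarrow> (int \<Rightarrow> sym) \<Rightarrow> int \<Rightarrow> sym" where
  "dbl z f g p = (if even (p - z) then f ((p - z) div 2) else g ((p - z) div 2))"

lemma dbl_ev: "p = z + 2 * c \<Longrightarrow> dbl z f g p = f c"
  unfolding dbl_def by simp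

lemma dbl_od: "p = z + 2 * c + 1 \<Longrightarrow> dbl z f g p = g c"
  unfolding dbl_def by simp

lemma dbl_ev'[simp]: "dbl z f g (z + 2 * c) = f c"
  by (rule dbl_ev) simp

lemma dbl_od'[simp]: "dbl z f g (z + 2 * c + 1) = g c"
  by (rule dbl_od) simp

lemma int_ev_od: obtains e where "q = z + 2 * e" | e where "q = z + 2 * e + (1::int)"
proof -
  have "q - z = 2 * ((q - z) div 2) \<or> q - z = 2 * ((q - z) div 2) + 1" by presburger
  then show ?thesis using that by (metis add.commute add.left_commute diff_add_cancel)
qed

lemma dbl_upd_ev: "p = z + 2 * c \<Longrightarrow> (dbl z f g)(p := s) = dbl z (f(c := s)) g"
proof (rule ext)
  fix q assume p: "p = z + 2 * c"
  show "((dbl z f g)(p := s)) q = dbl z (f(c := s)) g q"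
    by (cases q z rule: int_ev_od) (auto simp: p, presburger)
qed

lemma dbl_upd_od: "p = z + 2 * c + 1 \<Longrightarrow> (dbl z f g)(p := s) = dbl z f (g(c := s))"
proof (rule ext)
  fix q assume p: "p = z + 2 * c + 1"
  show "((dbl z f g)(p := s)) q = dbl z f (g(c := s)) q"
    by (cases q z rule: int_ev_od) (auto simp: p, presburger+)
qed


declare fun_upd_idem_iff[simp]

section \<open>Pair enumeration\<close>

fun sc :: "nat \<times> nat \<Rightarrow> nat \<times> nat" where
  "sc (n, i) = (if 0 < i then (Suc n, i - 1) else (0, Suc n))"

definition dec :: "nat \<Rightarrow> nat \<times> nat" where
  "dec E = (sc ^^ E) (0, 0)"

definition tri :: "nat \<Rightarrow> nat" where
  "tri s = s * (s + 1) div 2"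

lemma tri_Suc: "tri (Suc s) = tri s + Suc s"
  unfolding tri_def by (induction s) auto

lemma dec_diag: "j \<le> s \<Longrightarrow> dec (tri s + j) = (j, s - j)"
proof (induction s arbitrary: j)
  case 0
  then show ?case by (simp add: dec_def tri_def)
next
  case (Suc s)
  show ?case using Suc.prems
  proof (induction j)
    case 0
    have "dec (tri s + s) = (s, 0)" using Suc.IH[of s] by simp
    then have "dec (tri s + s + 1) = (0, Suc s)" unfolding dec_def by simp
    then show ?case by (simp add: tri_Suc)
  next
    case (Suc j)
    then have "dec (tri (Suc s) + j) = (j, Suc s - j)" by simp
    then have "dec (tri (Suc s) + j + 1) = sc (j, Suc s - j)" unfolding dec_def by simp
    then show ?case using Suc.prems by simp
  qed
qed

lemma dec_enc: "dec (tri (n + i) + n) = (n, i)"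
  using dec_diag[of n "n + i"] by simp

lemma dec_Suc: "dec (Suc E) = sc (dec E)"
  unfolding dec_def by simp

lemma dec_sum: "fst (dec E) + snd (dec E) \<le> E"
proof (induction E)
  case 0 then show ?case by (simp add: dec_def)
next
  case (Suc E)
  obtain n i where d: "dec E = (n, i)" by (cases "dec E") auto
  show ?case using Suc d by (auto simp: dec_Suc)
qed

definition ones :: "nat \<Rightarrow> int \<Rightarrow> sym" where
  "ones n c = (if 0 \<le> c \<and> c < int n then S1 else Blank)"

definition mkr :: "int \<Rightarrow> int \<Rightarrow> int \<Rightarrow> int \<Rightarrow> sym" where
  "mkr lo hi i c = (if lo \<le> c \<and> c \<le> hi then (if c < i then S0 else if c = i then S1 else Hash) else Blank)"

definition Lam :: "int \<Rightarrow> nat \<Rightarrow> nat \<Rightarrow> int \<Rightarrow> sym" where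
  "Lam z n i = dbl z (ones n) (mkr (-1) (int i) (int i))"

lemma ones_init: "ones n = init_tape (replicate n S1)"
  unfolding ones_def init_tape_def by (rule ext) auto

lemma LamE: "p = z + 2 * c \<Longrightarrow> Lam z n i p = ones n c"
  unfolding Lam_def by (rule dbl_ev)

lemma LamO: "p = z + 2 * c + 1 \<Longrightarrow> Lam z n i p = mkr (-1) (int i) (int i) c"
  unfolding Lam_def by (rule dbl_od)

fun bitb :: "bool \<Rightarrow> sym \<Rightarrow> bool" where
  "bitb False s = (s = S1 \<or> s = Hash)"
| "bitb True s = (s = S0 \<or> s = Hash)"

section \<open>The machine for the unary language\<close>

datatype fs = Cp | Ia | Ib | Ic | Id | Lp bool | Sa | Sb0 | Sb | Sc | Sd | Se | Sf
  | Sg bool | Sh bool | Si bool | Sj bool | Ta | Tb | Tc | Td | Te | Tf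
  | Ua | Ub | Uc | Ud | Ue | Uf
  | Sm nat bool | Ra nat bool | Rb nat bool | Rc nat bool | La nat bool | Lb nat bool | Lc nat bool
  | Pa bool | Pb bool | Pc bool | Pd bool

fun lfm :: "otm \<Rightarrow> nat \<Rightarrow> fs \<Rightarrow> sym \<Rightarrow> sym \<Rightarrow> fs act" where
  "lfm M NM Cp a c = (if a = S1 then Mv Cp Blank Rgt S1 Rgt else if a = Blank then Mv Ia Blank Stay c Lft else St False)"
| "lfm M NM Ia a c = Mv Ib a Lft c Stay"
| "lfm M NM Ib a c = Mv Ic S0 Rgt c Stay"
| "lfm M NM Ic a c = Mv Id a Rgt c Stay"
| "lfm M NM Id a c = Mv (Lp False) S1 Lft c Stay"
| "lfm M NM (Lp b) a c = (if c = S1 then Mv (if b then Sa else Lp True) a Stay Blank Lft else Ak 0 (Sm 0 b) (Sm 0 b))"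
| "lfm M NM Sa a c = Mv Sb0 a Rgt c Stay"
| "lfm M NM Sb0 a c = (if a = S1 then Mv Ua a Lft c Stay else Mv Sc a Rgt c Stay)"
| "lfm M NM Sb a c = (if a = S0 then Mv Sc a Rgt c Stay else Mv Sd Blank Lft c Stay)"
| "lfm M NM Sc a c = Mv Sb a Rgt c Stay"
| "lfm M NM Sd a c = Mv Se a Lft c Stay"
| "lfm M NM Se a c = Mv Sf S1 Lft c Stay"
| "lfm M NM Sf a c = Mv (Sg True) a Lft c Stay"
| "lfm M NM (Sg t) a c = (if a = S0 then Mv (Sh t) a Lft c Stay else Mv (Si t) a Rgt c Stay)"
| "lfm M NM (Sh t) a c = Mv (Sg t) a Lft c Stay"
| "lfm M NM (Si t) a c = Mv (Sj t) a Rgt c Stay"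
| "lfm M NM (Sj t) a c = Mv (if t then Ta else Lp False) a Rgt c Stay"
| "lfm M NM Ta a c = (if a = S1 then Mv Tb a Rgt c Stay else Mv Tc S1 Lft c Stay)"
| "lfm M NM Tb a c = Mv Ta a Rgt c Stay"
| "lfm M NM Tc a c = Mv Td a Lft c Stay"
| "lfm M NM Td a c = (if a = S1 then Mv Te a Lft c Stay else Mv Tf a Rgt c Stay)"
| "lfm M NM Te a c = Mv Td a Lft c Stay"
| "lfm M NM Tf a c = Mv (Lp False) a Rgt c Stay"
| "lfm M NM Ua a c = (if a = S1 then Mv Ub Blank Rgt c Stay else Mv Uc a Rgt c Stay)"
| "lfm M NM Ub a c = Mv Ua S0 Rgt c Stay"
| "lfm M NM Uc a c = Mv Ud S0 Rgt c Stay"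
| "lfm M NM Ud a c = Mv Ue a Rgt c Stay"
| "lfm M NM Ue a c = Mv Uf S1 Lft c Stay"
| "lfm M NM Uf a c = Mv (Sg False) a Lft c Stay"
| "lfm M NM (Sm q b) a c = (if q < NM then
      (case M q a c of
         Move q' s1 d1 s2 d2 \<Rightarrow> Mv (case d1 of Stay \<Rightarrow> Sm q' b | Rgt \<Rightarrow> Ra q' b | Lft \<Rightarrow> La q' b) s1 d1 s2 d2
       | Ask j qy qn \<Rightarrow> Ak j (Sm qy b) (Sm qn b)
       | Stop _ \<Rightarrow> Mv (Pa b) a Rgt c Stay)
    else St False)"
| "lfm M NM (Ra q b) a c = Mv (Rb q b) a Rgt c Stay"
| "lfm M NM (Rb q b) a c = Mv (Rc q b) a Rgt c Stay"
| "lfm M NM (Rc q b) a c = Mv (Sm q b) (if a = Blank then Hash else a) Lft c Stay"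
| "lfm M NM (La q b) a c = Mv (Lb q b) a Lft c Stay"
| "lfm M NM (Lb q b) a c = Mv (Lc q b) a Lft c Stay"
| "lfm M NM (Lc q b) a c = Mv (Sm q b) (if a = Blank then S0 else a) Rgt c Stay"
| "lfm M NM (Pa b) a c = (if a = S0 then Mv (Pb b) a Rgt c Stay else if a = Hash then Mv (Pc b) a Lft c Stay
      else if a = S1 then Mv (Pd b) a Lft c Stay else St False)"
| "lfm M NM (Pb b) a c = Mv (Pa b) a Rgt c Stay"
| "lfm M NM (Pc b) a c = Mv (Pa b) a Lft c Stay"
| "lfm M NM (Pd b) a c = St (bitb b a)"

lemma stp_wr: "M q (t1 h1) (t2 h2) = Mv q' s d (t2 h2) Stay \<Longrightarrow>
   stp Or M (q, t1, h1, t2, h2) = (q', t1(h1 := s), h1 + dsg d, t2, h2)"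
  by (simp add: stp_Mv mv_dsg)

lemma mkr_simps:
  "mkr lo hi i c = (if lo \<le> c \<and> c \<le> hi then (if c < i then S0 else if c = i then S1 else Hash) else Blank)"
  by (simp add: mkr_def)

lemma succ_pos:
  assumes i: "0 < i"
  shows "reach Or (lfm M NM) (Sa, Lam z n i, z, Q, qh) (Lp False, Lam z (Suc n) (i - 1), z, Q, qh) (4 * (n + i) + 20)"
proof -
  let ?M = "lfm M NM"
  let ?g = "mkr (-1) (int i) (int i)"
  let ?T = "Lam z n i"
  have T: "?T = dbl z (ones n) ?g" unfolding Lam_def by simp
  have r1: "reach Or ?M (Sa, ?T, z, Q, qh) (Sb, ?T, z + 3, Q, qh) 3"
  proof -
    have "stp Or ?M (Sa, ?T, z, Q, qh) = (Sb0, ?T, z + 1, Q, qh)" by (simp add: stp.simps)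
    moreover have "?T (z + 1) = S0" using i by (subst LamO[where c = 0]) (auto simp: mkr_def)
    then have "stp Or ?M (Sb0, ?T, z + 1, Q, qh) = (Sc, ?T, z + 2, Q, qh)"
      by (simp add: stp.simps)
    moreover have "stp Or ?M (Sc, ?T, z + 2, Q, qh) = (Sb, ?T, z + 3, Q, qh)" by (simp add: stp.simps)
    ultimately show ?thesis
      by (metis reach_step reach_step1 numeral_3_eq_3 One_nat_def)
  qed
  have r2: "reach Or ?M (Sb, ?T, z + 3, Q, qh) (Sb, ?T, z + 2 * int i + 1, Q, qh) (2 * (i - 1))"
  proof -
    have w: "reach Or ?M (Sb, ?T, z + 3, Q, qh) (Sb, ?T, z + 3 + 2 * dsg Rgt * int (i - 1), Q, qh) (2 * (i - 1))"
    proof (rule walk2[where A = "{S0}" and Y = Sc])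
      fix j assume j: "j < i - 1"
      show "?T (z + 3 + 2 * dsg Rgt * int j) \<in> {S0}" using j
        by (subst LamO[where c = "int j + 1"]) (auto simp: mkr_def)
    qed auto
    have e: "z + 3 + 2 * dsg Rgt * int (i - 1) = z + 2 * int i + 1" using i by simp
    show ?thesis using w unfolding e .
  qed
  let ?g2 = "mkr (-1) (int i - 1) (int i - 1)"
  let ?T2 = "dbl z (ones n) ?g2"
  have g2: "(?g((int i) := Blank))(int i - 1 := S1) = ?g2"
    using i by (intro ext) (auto simp: mkr_def)
  have T2: "(?T(z + 2 * int i + 1 := Blank))(z + 2 * int i - 1 := S1) = ?T2"
    unfolding T
    by (subst dbl_upd_od[where c = "int i"], simp, subst dbl_upd_od[where c = "int i - 1"], simp, simp add: g2)
  have r3: "reach Or ?M (Sb, ?T, z + 2 * int i + 1, Q, qh) (Sg True, ?T2, z + 2 * int i - 3, Q, qh) 4"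
  proof -
    have "?T (z + 2 * int i + 1) = S1" by (subst LamO[where c = "int i"]) (auto simp: mkr_def)
    then have a: "stp Or ?M (Sb, ?T, z + 2 * int i + 1, Q, qh) = (Sd, ?T(z + 2 * int i + 1 := Blank), z + 2 * int i, Q, qh)"
      by (simp add: stp.simps)
    have b: "stp Or ?M (Sd, ?T(z + 2 * int i + 1 := Blank), z + 2 * int i, Q, qh) = (Se, ?T(z + 2 * int i + 1 := Blank), z + 2 * int i - 1, Q, qh)"
      by (simp add: stp.simps)
    have c: "stp Or ?M (Se, ?T(z + 2 * int i + 1 := Blank), z + 2 * int i - 1, Q, qh) = (Sf, ?T2, z + 2 * int i - 2, Q, qh)"
      using T2 by (simp add: stp.simps)
    have d: "stp Or ?M (Sf, ?T2, z + 2 * int i - 2, Q, qh) = (Sg True, ?T2, z + 2 * int i - 3, Q, qh)"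
      by (simp add: stp.simps)
    show ?thesis using reach_step[OF a reach_step[OF b reach_step[OF c reach_step1[OF d]]]] by (simp add: numeral_eq_Suc)
  qed
  have r4: "reach Or ?M (Sg True, ?T2, z + 2 * int i - 3, Q, qh) (Sg True, ?T2, z - 3, Q, qh) (2 * i)"
  proof -
    have w: "reach Or ?M (Sg True, ?T2, z + 2 * int i - 3, Q, qh) (Sg True, ?T2, z + 2 * int i - 3 + 2 * dsg Lft * int i, Q, qh) (2 * i)"
    proof (rule walk2[where A = "{S0}" and Y = "Sh True"])
      fix j assume j: "j < i"
      show "?T2 (z + 2 * int i - 3 + 2 * dsg Lft * int j) \<in> {S0}" using j
        by (subst dbl_od[where c = "int i - 2 - int j"]) (auto simp: mkr_def)
    qed auto
    have e: "z + 2 * int i - 3 + 2 * dsg Lft * int i = z - 3" by simp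
    show ?thesis using w unfolding e .
  qed
  have r5: "reach Or ?M (Sg True, ?T2, z - 3, Q, qh) (Ta, ?T2, z, Q, qh) 3"
  proof -
    have "?T2 (z - 3) = Blank" by (subst dbl_od[where c = "-2"]) (auto simp: mkr_def)
    then have a: "stp Or ?M (Sg True, ?T2, z - 3, Q, qh) = (Si True, ?T2, z - 2, Q, qh)"
      by (simp add: stp.simps)
    have b: "stp Or ?M (Si True, ?T2, z - 2, Q, qh) = (Sj True, ?T2, z - 1, Q, qh)"
      by (simp add: stp.simps)
    have c: "stp Or ?M (Sj True, ?T2, z - 1, Q, qh) = (Ta, ?T2, z, Q, qh)"
      by (simp add: stp.simps)
    show ?thesis using reach_step[OF a reach_step[OF b reach_step1[OF c]]] by (simp add: numeral_eq_Suc)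
  qed
  have r6: "reach Or ?M (Ta, ?T2, z, Q, qh) (Ta, ?T2, z + 2 * int n, Q, qh) (2 * n)"
  proof -
    have w: "reach Or ?M (Ta, ?T2, z, Q, qh) (Ta, ?T2, z + 2 * dsg Rgt * int n, Q, qh) (2 * n)"
    proof (rule walk2[where A = "{S1}" and Y = "Tb"])
      fix j assume j: "j < n"
      show "?T2 (z + 2 * dsg Rgt * int j) \<in> {S1}" using j
        by (subst dbl_ev[where c = "int j"]) (auto simp: ones_def)
    qed auto
    show ?thesis using w by simp
  qed
  let ?T3 = "dbl z (ones (Suc n)) ?g2"
  have T3: "?T2(z + 2 * int n := S1) = ?T3"
    by (subst dbl_upd_ev[where c = "int n"], simp, auto simp: ones_def intro!: arg_cong[where f = "\<lambda>f. dbl z f ?g2"])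
  have r7: "reach Or ?M (Ta, ?T2, z + 2 * int n, Q, qh) (Td, ?T3, z + 2 * int n - 2, Q, qh) 2"
  proof -
    have "?T2 (z + 2 * int n) = Blank" by (subst dbl_ev[where c = "int n"]) (auto simp: ones_def)
    then have a: "stp Or ?M (Ta, ?T2, z + 2 * int n, Q, qh) = (Tc, ?T3, z + 2 * int n - 1, Q, qh)"
      using T3 by (simp add: stp.simps)
    have b: "stp Or ?M (Tc, ?T3, z + 2 * int n - 1, Q, qh) = (Td, ?T3, z + 2 * int n - 2, Q, qh)"
      by (simp add: stp.simps)
    show ?thesis using reach_step[OF a reach_step1[OF b]] by (simp add: numeral_eq_Suc)
  qed
  have r8: "reach Or ?M (Td, ?T3, z + 2 * int n - 2, Q, qh) (Td, ?T3, z - 2, Q, qh) (2 * n)"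
  proof -
    have w: "reach Or ?M (Td, ?T3, z + 2 * int n - 2, Q, qh) (Td, ?T3, z + 2 * int n - 2 + 2 * dsg Lft * int n, Q, qh) (2 * n)"
    proof (rule walk2[where A = "{S1}" and Y = "Te"])
      fix j assume j: "j < n"
      show "?T3 (z + 2 * int n - 2 + 2 * dsg Lft * int j) \<in> {S1}" using j
        by (subst dbl_ev[where c = "int n - 1 - int j"]) (auto simp: ones_def)
    qed auto
    have e: "z + 2 * int n - 2 + 2 * dsg Lft * int n = z - 2" by simp
    show ?thesis using w unfolding e .
  qed
  have r9: "reach Or ?M (Td, ?T3, z - 2, Q, qh) (Lp False, ?T3, z, Q, qh) 2"
  proof -
    have "?T3 (z - 2) = Blank" by (subst dbl_ev[where c = "-1"]) (auto simp: ones_def)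
    then have a: "stp Or ?M (Td, ?T3, z - 2, Q, qh) = (Tf, ?T3, z - 1, Q, qh)"
      by (simp add: stp.simps)
    have b: "stp Or ?M (Tf, ?T3, z - 1, Q, qh) = (Lp False, ?T3, z, Q, qh)"
      by (simp add: stp.simps)
    show ?thesis using reach_step[OF a reach_step1[OF b]] by (simp add: numeral_eq_Suc)
  qed
  have L: "Lam z (Suc n) (i - 1) = ?T3" unfolding Lam_def using i by simp
  have "reach Or ?M (Sa, ?T, z, Q, qh) (Lp False, ?T3, z, Q, qh)
     (3 + 2 * (i - 1) + 4 + 2 * i + 3 + 2 * n + 2 + 2 * n + 2)"
    by (rule reach_trans[OF reach_trans[OF reach_trans[OF reach_trans[OF reach_trans[OF reach_trans[OF
          reach_trans[OF reach_trans[OF r1 r2] r3] r4] r5] r6] r7] r8] r9])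
  then show ?thesis unfolding L by (rule reach_mono) simp
qed


lemma succ_zero:
  "reach Or (lfm M NM) (Sa, Lam z n 0, z, Q, qh) (Lp False, Lam z 0 (Suc n), z, Q, qh) (4 * n + 20)"
proof -
  let ?M = "lfm M NM"
  let ?T = "Lam z n 0"
  define fe where "fe c = (\<lambda>j::int. if int c \<le> j \<and> j < int n then S1 else Blank)" for c :: nat
  define gm where "gm c = (\<lambda>j::int. if -1 \<le> j \<and> j < int c then S0 else if j = 0 then S1 else Blank)" for c :: nat
  define U where "U c = dbl z (fe c) (gm c)" for c
  have U0: "U 0 = ?T" unfolding U_def Lam_def fe_def gm_def
    by (rule arg_cong2[where f = "dbl z"]) (auto simp: ones_def mkr_def intro!: ext)
  have r1: "reach Or ?M (Sa, ?T, z, Q, qh) (Ua, ?T, z, Q, qh) 2"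
  proof -
    have a: "stp Or ?M (Sa, ?T, z, Q, qh) = (Sb0, ?T, z + 1, Q, qh)" by (simp add: stp.simps)
    have "?T (z + 1) = S1" by (subst LamO[where c = 0]) (auto simp: mkr_def)
    then have b: "stp Or ?M (Sb0, ?T, z + 1, Q, qh) = (Ua, ?T, z, Q, qh)" by (simp add: stp.simps)
    show ?thesis using reach_step[OF a reach_step1[OF b]] by (simp add: numeral_eq_Suc)
  qed
  have loop: "c \<le> n \<Longrightarrow> reach Or ?M (Ua, U 0, z, Q, qh) (Ua, U c, z + 2 * int c, Q, qh) (2 * c)" for c
  proof (induction c)
    case 0 then show ?case by (simp add: reach_refl)
  next
    case (Suc c)
    then have IH: "reach Or ?M (Ua, U 0, z, Q, qh) (Ua, U c, z + 2 * int c, Q, qh) (2 * c)" by simp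
    have "U c (z + 2 * int c) = S1" unfolding U_def fe_def using Suc.prems by simp
    then have a: "stp Or ?M (Ua, U c, z + 2 * int c, Q, qh) = (Ub, (U c)(z + 2 * int c := Blank), z + 2 * int c + 1, Q, qh)"
      by (simp add: stp.simps)
    have upd: "((U c)(z + 2 * int c := Blank))(z + 2 * int c + 1 := S0) = U (Suc c)"
      unfolding U_def
      apply (subst dbl_upd_ev[where c = "int c"], simp)
      apply (subst dbl_upd_od[where c = "int c"], simp)
      apply (rule arg_cong2[where f = "dbl z"])
       apply (auto simp: fe_def gm_def)
      done
    have b: "stp Or ?M (Ub, (U c)(z + 2 * int c := Blank), z + 2 * int c + 1, Q, qh) = (Ua, U (Suc c), z + 2 * int (Suc c), Q, qh)"
      using upd by (simp add: stp.simps)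
    have "reach Or ?M (Ua, U c, z + 2 * int c, Q, qh) (Ua, U (Suc c), z + 2 * int (Suc c), Q, qh) 2"
      using reach_step[OF a reach_step1[OF b]] by (simp add: numeral_eq_Suc)
    from reach_trans[OF IH this] show ?case by simp
  qed
  let ?T2 = "Lam z 0 (Suc n)"
  have r3: "reach Or ?M (Ua, U n, z + 2 * int n, Q, qh) (Sg False, ?T2, z + 2 * int n + 1, Q, qh) 5"
  proof -
    have "U n (z + 2 * int n) = Blank" unfolding U_def fe_def by simp
    then have a: "stp Or ?M (Ua, U n, z + 2 * int n, Q, qh) = (Uc, U n, z + 2 * int n + 1, Q, qh)"
      by (simp add: stp.simps)
    have b: "stp Or ?M (Uc, U n, z + 2 * int n + 1, Q, qh) = (Ud, (U n)(z + 2 * int n + 1 := S0), z + 2 * int n + 2, Q, qh)"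
      by (simp add: stp.simps)
    have c: "stp Or ?M (Ud, (U n)(z + 2 * int n + 1 := S0), z + 2 * int n + 2, Q, qh) = (Ue, (U n)(z + 2 * int n + 1 := S0), z + 2 * int n + 3, Q, qh)"
      by (simp add: stp.simps)
    have upd: "((U n)(z + 2 * int n + 1 := S0))(z + 2 * int n + 3 := S1) = ?T2"
      unfolding U_def Lam_def
      apply (subst dbl_upd_od[where c = "int n"], simp)
      apply (subst dbl_upd_od[where c = "int n + 1"], simp)
      apply (rule arg_cong2[where f = "dbl z"])
       apply (auto simp: fe_def gm_def ones_def mkr_def)
      done
    have d: "stp Or ?M (Ue, (U n)(z + 2 * int n + 1 := S0), z + 2 * int n + 3, Q, qh) = (Uf, ?T2, z + 2 * int n + 2, Q, qh)"
      using upd by (simp add: stp.simps)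
    have e: "stp Or ?M (Uf, ?T2, z + 2 * int n + 2, Q, qh) = (Sg False, ?T2, z + 2 * int n + 1, Q, qh)"
      by (simp add: stp.simps)
    show ?thesis using reach_step[OF a reach_step[OF b reach_step[OF c reach_step[OF d reach_step1[OF e]]]]]
      by (simp add: numeral_eq_Suc)
  qed
  have r4: "reach Or ?M (Sg False, ?T2, z + 2 * int n + 1, Q, qh) (Sg False, ?T2, z - 3, Q, qh) (2 * (n + 2))"
  proof -
    have w: "reach Or ?M (Sg False, ?T2, z + 2 * int n + 1, Q, qh) (Sg False, ?T2, z + 2 * int n + 1 + 2 * dsg Lft * int (n + 2), Q, qh) (2 * (n + 2))"
    proof (rule walk2[where A = "{S0}" and Y = "Sh False"])
      fix j assume j: "j < n + 2"
      show "?T2 (z + 2 * int n + 1 + 2 * dsg Lft * int j) \<in> {S0}" using j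
        by (subst LamO[where c = "int n - int j"]) (auto simp: mkr_def)
    qed auto
    have e: "z + 2 * int n + 1 + 2 * dsg Lft * int (n + 2) = z - 3" by simp
    show ?thesis using w unfolding e .
  qed
  have r5: "reach Or ?M (Sg False, ?T2, z - 3, Q, qh) (Lp False, ?T2, z, Q, qh) 3"
  proof -
    have "?T2 (z - 3) = Blank" by (subst LamO[where c = "-2"]) (auto simp: mkr_def)
    then have a: "stp Or ?M (Sg False, ?T2, z - 3, Q, qh) = (Si False, ?T2, z - 2, Q, qh)"
      by (simp add: stp.simps)
    have b: "stp Or ?M (Si False, ?T2, z - 2, Q, qh) = (Sj False, ?T2, z - 1, Q, qh)"
      by (simp add: stp.simps)
    have c: "stp Or ?M (Sj False, ?T2, z - 1, Q, qh) = (Lp False, ?T2, z, Q, qh)"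
      by (simp add: stp.simps)
    show ?thesis using reach_step[OF a reach_step[OF b reach_step1[OF c]]] by (simp add: numeral_eq_Suc)
  qed
  have r2: "reach Or ?M (Ua, ?T, z, Q, qh) (Ua, U n, z + 2 * int n, Q, qh) (2 * n)"
    using loop[of n] U0 by simp
  have "reach Or ?M (Sa, ?T, z, Q, qh) (Lp False, ?T2, z, Q, qh) (2 + 2 * n + 5 + 2 * (n + 2) + 3)"
    by (rule reach_trans[OF reach_trans[OF reach_trans[OF reach_trans[OF r1 r2] r3] r4] r5])
  then show ?thesis by (rule reach_mono) simp
qed

definition LamP :: "int \<Rightarrow> nat \<times> nat \<Rightarrow> int \<Rightarrow> sym" where
  "LamP z p = Lam z (fst p) (snd p)"

lemma succ_all:
  "reach Or (lfm M NM) (Sa, LamP z p, z, Q, qh) (Lp False, LamP z (sc p), z, Q, qh) (4 * (fst p + snd p) + 20)"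
proof -
  obtain n i where p: "p = (n, i)" by (cases p) auto
  show ?thesis
  proof (cases "0 < i")
    case True then show ?thesis using succ_pos[OF True] unfolding p LamP_def by simp
  next
    case False then show ?thesis using succ_zero[of Or M NM z n Q qh] unfolding p LamP_def by simp
  qed
qed


lemma copy_phase:
  assumes "c \<le> length x" "\<forall>j<c. x ! j = S1"
  shows "reach Or (lfm M NM) (Cp, init_tape x, 0, (\<lambda>_. Blank), 0)
     (Cp, (\<lambda>p. if 0 \<le> p \<and> p < int c then Blank else init_tape x p), int c, ones c, int c) c"
  using assms
proof (induction c)
  case 0
  have "(\<lambda>p. if 0 \<le> p \<and> p < int 0 then Blank else init_tape x p) = init_tape x" by (rule ext) auto
  moreover have "ones 0 = (\<lambda>_. Blank)" unfolding ones_def by auto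
  ultimately show ?case by (simp add: reach_refl)
next
  case (Suc c)
  let ?W = "\<lambda>p. if 0 \<le> p \<and> p < int c then Blank else init_tape x p"
  have IH: "reach Or (lfm M NM) (Cp, init_tape x, 0, (\<lambda>_. Blank), 0) (Cp, ?W, int c, ones c, int c) c"
    using Suc by simp
  have "?W (int c) = S1" using Suc.prems by (simp add: init_tape_def)
  moreover have "ones c (int c) = Blank" by (simp add: ones_def)
  ultimately have "stp Or (lfm M NM) (Cp, ?W, int c, ones c, int c) =
      (Cp, ?W(int c := Blank), int c + 1, (ones c)(int c := S1), int c + 1)"
    by (simp add: stp.simps)
  moreover have "?W(int c := Blank) = (\<lambda>p. if 0 \<le> p \<and> p < int (Suc c) then Blank else init_tape x p)"
    by (rule ext) auto
  moreover have "(ones c)(int c := S1) = ones (Suc c)" by (rule ext) (auto simp: ones_def)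
  ultimately have "reach Or (lfm M NM) (Cp, ?W, int c, ones c, int c)
     (Cp, (\<lambda>p. if 0 \<le> p \<and> p < int (Suc c) then Blank else init_tape x p), int (Suc c), ones (Suc c), int (Suc c)) 1"
    by (intro reach_step1) simp
  from reach_trans[OF IH this] show ?case by simp
qed

lemma pre_unary:
  "reach Or (lfm M NM) (Cp, init_tape (replicate m S1), 0, (\<lambda>_. Blank), 0)
     (Lp False, LamP (int m) (0, 0), int m, ones m, int m - 1) (m + 5)"
proof -
  let ?M = "lfm M NM"
  let ?x = "replicate m S1"
  have e: "(\<lambda>p. if 0 \<le> p \<and> p < int m then Blank else init_tape ?x p) = (\<lambda>_. Blank)"
    by (rule ext) (auto simp: init_tape_def)
  have r1: "reach Or ?M (Cp, init_tape ?x, 0, (\<lambda>_. Blank), 0) (Cp, (\<lambda>_. Blank), int m, ones m, int m) m"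
    using copy_phase[of m ?x Or M NM] e by simp
  let ?z = "int m"
  have a: "stp Or ?M (Cp, (\<lambda>_. Blank), ?z, ones m, ?z) = (Ia, (\<lambda>_. Blank), ?z, ones m, ?z - 1)"
    by (simp add: stp.simps ones_def)
  have b: "stp Or ?M (Ia, (\<lambda>_. Blank), ?z, ones m, ?z - 1) = (Ib, (\<lambda>_. Blank), ?z - 1, ones m, ?z - 1)"
    by (simp add: stp.simps)
  have c: "stp Or ?M (Ib, (\<lambda>_. Blank), ?z - 1, ones m, ?z - 1) = (Ic, (\<lambda>_. Blank)(?z - 1 := S0), ?z, ones m, ?z - 1)"
    by (simp add: stp.simps)
  have d: "stp Or ?M (Ic, (\<lambda>_. Blank)(?z - 1 := S0), ?z, ones m, ?z - 1) = (Id, (\<lambda>_. Blank)(?z - 1 := S0), ?z + 1, ones m, ?z - 1)"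
    by (simp add: stp.simps)
  have L: "((\<lambda>_. Blank)(?z - 1 := S0))(?z + 1 := S1) = LamP ?z (0, 0)"
  proof (rule ext)
    fix p
    show "(((\<lambda>_. Blank)(?z - 1 := S0))(?z + 1 := S1)) p = LamP ?z (0, 0) p"
      unfolding LamP_def Lam_def dbl_def by (auto simp: ones_def mkr_def) presburger+
  qed
  have f: "stp Or ?M (Id, (\<lambda>_. Blank)(?z - 1 := S0), ?z + 1, ones m, ?z - 1) = (Lp False, LamP ?z (0, 0), ?z, ones m, ?z - 1)"
    using L by (simp add: stp.simps)
  have "reach Or ?M (Cp, (\<lambda>_. Blank), int m, ones m, int m) (Lp False, LamP ?z (0, 0), ?z, ones m, ?z - 1) 5"
    using reach_step[OF a reach_step[OF b reach_step[OF c reach_step[OF d reach_step1[OF f]]]]]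
    by (simp add: numeral_eq_Suc)
  from reach_trans[OF r1 this] show ?thesis by simp
qed

lemma loop_phase:
  "reach Or (lfm M NM) (Lp (odd u), LamP z (dec (u div 2)), z, ones r, int r - 1)
     (Lp (odd (u + r)), LamP z (dec ((u + r) div 2)), z, ones 0, -1) (r * (4 * (u + r) + 21))"
proof (induction r arbitrary: u)
  case 0 then show ?case by (simp add: reach_refl)
next
  case (Suc r)
  let ?M = "lfm M NM"
  have IH: "reach Or ?M (Lp (odd (Suc u)), LamP z (dec (Suc u div 2)), z, ones r, int r - 1)
     (Lp (odd (u + Suc r)), LamP z (dec ((u + Suc r) div 2)), z, ones 0, -1) (r * (4 * (u + Suc r) + 21))"
    using Suc.IH[of "Suc u"] by simp
  have q: "ones (Suc r) (int (Suc r) - 1) = S1" by (simp add: ones_def)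
  have qq: "(ones (Suc r))(int (Suc r) - 1 := Blank) = ones r" by (rule ext) (auto simp: ones_def)
  have first: "reach Or ?M (Lp (odd u), LamP z (dec (u div 2)), z, ones (Suc r), int (Suc r) - 1)
     (Lp (odd (Suc u)), LamP z (dec (Suc u div 2)), z, ones r, int r - 1) (4 * (u + Suc r) + 21)"
  proof (cases "odd u")
    case True
    have a: "stp Or ?M (Lp (odd u), LamP z (dec (u div 2)), z, ones (Suc r), int (Suc r) - 1) =
        (Sa, LamP z (dec (u div 2)), z, ones r, int r - 1)"
      using True q qq by (simp add: stp.simps)
    have s: "reach Or ?M (Sa, LamP z (dec (u div 2)), z, ones r, int r - 1)
        (Lp False, LamP z (sc (dec (u div 2))), z, ones r, int r - 1) (4 * (fst (dec (u div 2)) + snd (dec (u div 2))) + 20)"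
      by (rule succ_all)
    have "fst (dec (u div 2)) + snd (dec (u div 2)) \<le> u" using dec_sum[of "u div 2"] by simp
    then have s': "reach Or ?M (Sa, LamP z (dec (u div 2)), z, ones r, int r - 1)
        (Lp False, LamP z (sc (dec (u div 2))), z, ones r, int r - 1) (4 * (u + Suc r) + 20)"
      using reach_mono[OF s] by simp
    have e: "sc (dec (u div 2)) = dec (Suc u div 2)" using True
      by (simp add: dec_Suc[symmetric])
    show ?thesis using reach_step[OF a s'] True e by simp
  next
    case False
    have a: "stp Or ?M (Lp (odd u), LamP z (dec (u div 2)), z, ones (Suc r), int (Suc r) - 1) =
        (Lp True, LamP z (dec (u div 2)), z, ones r, int r - 1)"
      using False q qq by (simp add: stp.simps)
    have e: "Suc u div 2 = u div 2" using False by presburger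
    show ?thesis using reach_step1[OF a] False e by (auto intro: reach_mono)
  qed
  from reach_trans[OF first IH] show ?case by (simp add: algebra_simps)
qed


fun simc :: "int \<Rightarrow> nat \<Rightarrow> bool \<Rightarrow> int \<Rightarrow> int \<Rightarrow> conf \<Rightarrow> fs cfg" where
  "simc z i b lo hi (q, t1, h1, t2, h2) = (Sm q b, dbl z t1 (mkr lo hi (int i)), z + 2 * h1, t2, h2)"

fun hdc :: "conf \<Rightarrow> int" where
  "hdc (q, t1, h1, t2, h2) = h1"

definition sinv :: "int \<Rightarrow> int \<Rightarrow> nat \<Rightarrow> int \<Rightarrow> bool" where
  "sinv lo hi i h \<longleftrightarrow> lo \<le> h - 1 \<and> h \<le> hi \<and> lo \<le> int i \<and> int i \<le> hi"

lemma mkr_extR: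
  assumes "sinv lo hi i h"
  shows "(mkr lo hi (int i))(h + 1 := (if mkr lo hi (int i) (h + 1) = Blank then Hash else mkr lo hi (int i) (h + 1)))
     = mkr lo (max hi (h + 1)) (int i)"
  using assms unfolding sinv_def by (intro ext) (auto simp: mkr_def)

lemma mkr_extL:
  assumes "sinv lo hi i h"
  shows "(mkr lo hi (int i))(h - 2 := (if mkr lo hi (int i) (h - 2) = Blank then S0 else mkr lo hi (int i) (h - 2)))
     = mkr (min lo (h - 2)) hi (int i)"
  using assms unfolding sinv_def by (intro ext) (auto simp: mkr_def)

lemma sim_step:
  assumes q: "q < NM" and ns: "stop_of M (q, t1, h1, t2, h2) = None" and inv: "sinv lo hi i h1"
  shows "\<exists>lo' hi'. reach Or (lfm M NM) (simc z i b lo hi (q, t1, h1, t2, h2))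
            (simc z i b lo' hi' (step Or M (q, t1, h1, t2, h2))) 4
          \<and> sinv lo' hi' i (hdc (step Or M (q, t1, h1, t2, h2)))"
proof -
  let ?g = "mkr lo hi (int i)"
  let ?D = "dbl z t1 ?g"
  let ?LM = "lfm M NM"
  have D0: "?D (z + 2 * h1) = t1 h1" by simp
  show ?thesis
  proof (cases "M q (t1 h1) (t2 h2)")
    case (Move q' s1 d1 s2 d2)
    note mv = Move
    show ?thesis
    proof (cases d1)
      case Stay
      have "stp Or ?LM (simc z i b lo hi (q, t1, h1, t2, h2)) = simc z i b lo hi (step Or M (q, t1, h1, t2, h2))"
        using q mv Stay by (simp add: stp.simps dbl_upd_ev[where c = h1])
      then have r: "reach Or ?LM (simc z i b lo hi (q, t1, h1, t2, h2)) (simc z i b lo hi (step Or M (q, t1, h1, t2, h2))) 4"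
        by (rule reach_mono[OF reach_step1]) simp_all
      have "hdc (step Or M (q, t1, h1, t2, h2)) = h1" using mv Stay by simp
      then show ?thesis using r inv by (intro exI[of _ lo] exI[of _ hi]) simp
    next
      case Rgt
      let ?t1 = "t1(h1 := s1)"
      let ?D1 = "dbl z ?t1 ?g"
      let ?w = "if ?g (h1 + 1) = Blank then Hash else ?g (h1 + 1)"
      let ?hi = "max hi (h1 + 1)"
      have a: "stp Or ?LM (simc z i b lo hi (q, t1, h1, t2, h2)) = (Ra q' b, ?D1, z + 2 * h1 + 1, t2(h2 := s2), mv d2 h2)"
        using q mv Rgt by (simp add: stp.simps dbl_upd_ev[where c = h1])
      have b: "stp Or ?LM (Ra q' b, ?D1, z + 2 * h1 + 1, t2(h2 := s2), mv d2 h2) = (Rb q' b, ?D1, z + 2 * h1 + 2, t2(h2 := s2), mv d2 h2)"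
        by (simp add: stp.simps)
      have c: "stp Or ?LM (Rb q' b, ?D1, z + 2 * h1 + 2, t2(h2 := s2), mv d2 h2) = (Rc q' b, ?D1, z + 2 * h1 + 3, t2(h2 := s2), mv d2 h2)"
        by (simp add: stp.simps)
      have rd: "?D1 (z + 2 * h1 + 3) = ?g (h1 + 1)" by (rule dbl_od) simp
      have up: "?D1(z + 2 * h1 + 3 := ?w) = dbl z ?t1 (mkr lo ?hi (int i))"
        by (subst dbl_upd_od[where c = "h1 + 1"]) (simp_all add: mkr_extR[OF inv])
      have d: "stp Or ?LM (Rc q' b, ?D1, z + 2 * h1 + 3, t2(h2 := s2), mv d2 h2) = (Sm q' b, dbl z ?t1 (mkr lo ?hi (int i)), z + 2 * h1 + 2, t2(h2 := s2), mv d2 h2)"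
        using rd up by (simp add: stp.simps)
      have st: "step Or M (q, t1, h1, t2, h2) = (q', ?t1, h1 + 1, t2(h2 := s2), mv d2 h2)"
        using mv Rgt by simp
      have e: "simc z i b lo ?hi (step Or M (q, t1, h1, t2, h2)) = (Sm q' b, dbl z ?t1 (mkr lo ?hi (int i)), z + 2 * h1 + 2, t2(h2 := s2), mv d2 h2)"
        unfolding st by simp
      have "reach Or ?LM (simc z i b lo hi (q, t1, h1, t2, h2)) (simc z i b lo ?hi (step Or M (q, t1, h1, t2, h2))) 4"
        unfolding e using reach_step[OF a reach_step[OF b reach_step[OF c reach_step1[OF d]]]]
        by (simp add: numeral_eq_Suc)
      moreover have "sinv lo ?hi i (hdc (step Or M (q, t1, h1, t2, h2)))" using inv unfolding st sinv_def by auto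
      ultimately show ?thesis by blast
    next
      case Lft
      let ?t1 = "t1(h1 := s1)"
      let ?D1 = "dbl z ?t1 ?g"
      let ?w = "if ?g (h1 - 2) = Blank then S0 else ?g (h1 - 2)"
      let ?lo = "min lo (h1 - 2)"
      have a: "stp Or ?LM (simc z i b lo hi (q, t1, h1, t2, h2)) = (La q' b, ?D1, z + 2 * h1 - 1, t2(h2 := s2), mv d2 h2)"
        using q mv Lft by (simp add: stp.simps dbl_upd_ev[where c = h1])
      have b: "stp Or ?LM (La q' b, ?D1, z + 2 * h1 - 1, t2(h2 := s2), mv d2 h2) = (Lb q' b, ?D1, z + 2 * h1 - 2, t2(h2 := s2), mv d2 h2)"
        by (simp add: stp.simps)
      have c: "stp Or ?LM (Lb q' b, ?D1, z + 2 * h1 - 2, t2(h2 := s2), mv d2 h2) = (Lc q' b, ?D1, z + 2 * h1 - 3, t2(h2 := s2), mv d2 h2)"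
        by (simp add: stp.simps)
      have rd: "?D1 (z + 2 * h1 - 3) = ?g (h1 - 2)" by (rule dbl_od) simp
      have up: "?D1(z + 2 * h1 - 3 := ?w) = dbl z ?t1 (mkr ?lo hi (int i))"
        by (subst dbl_upd_od[where c = "h1 - 2"]) (simp_all add: mkr_extL[OF inv])
      have d: "stp Or ?LM (Lc q' b, ?D1, z + 2 * h1 - 3, t2(h2 := s2), mv d2 h2) = (Sm q' b, dbl z ?t1 (mkr ?lo hi (int i)), z + 2 * h1 - 2, t2(h2 := s2), mv d2 h2)"
        using rd up by (simp add: stp.simps)
      have st: "step Or M (q, t1, h1, t2, h2) = (q', ?t1, h1 - 1, t2(h2 := s2), mv d2 h2)"
        using mv Lft by simp
      have e: "simc z i b ?lo hi (step Or M (q, t1, h1, t2, h2)) = (Sm q' b, dbl z ?t1 (mkr ?lo hi (int i)), z + 2 * h1 - 2, t2(h2 := s2), mv d2 h2)"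
        unfolding st by simp
      have "reach Or ?LM (simc z i b lo hi (q, t1, h1, t2, h2)) (simc z i b ?lo hi (step Or M (q, t1, h1, t2, h2))) 4"
        unfolding e using reach_step[OF a reach_step[OF b reach_step[OF c reach_step1[OF d]]]]
        by (simp add: numeral_eq_Suc)
      moreover have "sinv ?lo hi i (hdc (step Or M (q, t1, h1, t2, h2)))" using inv unfolding st sinv_def by auto
      ultimately show ?thesis by blast
    qed
  next
    case (Ask j qy qn)
    have "stp Or ?LM (simc z i b lo hi (q, t1, h1, t2, h2)) = simc z i b lo hi (step Or M (q, t1, h1, t2, h2))"
      using q Ask by (simp add: stp.simps)
    then have r: "reach Or ?LM (simc z i b lo hi (q, t1, h1, t2, h2)) (simc z i b lo hi (step Or M (q, t1, h1, t2, h2))) 4"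
      by (rule reach_mono[OF reach_step1]) simp_all
    have "hdc (step Or M (q, t1, h1, t2, h2)) = h1" using Ask by simp
    then show ?thesis using r inv by (intro exI[of _ lo] exI[of _ hi]) simp
  next
    case (Stop x)
    then show ?thesis using ns by simp
  qed
qed


lemma wf_step:
  assumes "wf_otm N M" "fst c < N"
  shows "fst (step Or M c) < N"
proof -
  obtain q t1 h1 t2 h2 where c: "c = (q, t1, h1, t2, h2)" by (cases c) auto
  have q: "q < N" using assms c by simp
  have tg: "\<forall>q'\<in>targets (M q (t1 h1) (t2 h2)). q' < N" using assms(1) q unfolding wf_otm_def by blast
  show ?thesis unfolding c using tg q by (cases "M q (t1 h1) (t2 h2)") auto
qed

lemma wf_pow:
  assumes "wf_otm N M" "fst c < N"
  shows "fst ((step Or M ^^ t) c) < N"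
  by (induction t) (auto intro: wf_step[OF assms(1)] simp: assms(2))

lemma hd_step0: "\<bar>hdc (step Or M (q, t1, h1, t2, h2))\<bar> \<le> \<bar>h1\<bar> + 1"
proof (cases "M q (t1 h1) (t2 h2)")
  case (Move q' s1 d1 s2 d2) then show ?thesis by (cases d1) auto
qed auto

lemma hd_step: "\<bar>hdc (step Or M c)\<bar> \<le> \<bar>hdc c\<bar> + 1"
proof -
  obtain q t1 h1 t2 h2 where c: "c = (q, t1, h1, t2, h2)" by (cases c) auto
  show ?thesis using hd_step0 unfolding c by simp
qed

lemma hd_pow: "\<bar>hdc ((step Or M ^^ t) c)\<bar> \<le> \<bar>hdc c\<bar> + int t"
proof (induction t)
  case 0 then show ?case by simp
next
  case (Suc t)
  then show ?case using hd_step[of Or M "(step Or M ^^ t) c"] by simp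
qed

lemma stop_fix: "stop_of M c \<noteq> None \<Longrightarrow> step Or M c = c"
proof -
  obtain q t1 h1 t2 h2 where c: "c = (q, t1, h1, t2, h2)" by (cases c) auto
  assume "stop_of M c \<noteq> None"
  then show ?thesis unfolding c by (cases "M q (t1 h1) (t2 h2)") auto
qed

lemma stop_fix_pow: "stop_of M c \<noteq> None \<Longrightarrow> (step Or M ^^ t) c = c"
  by (induction t) (auto simp: stop_fix)

lemma sim_run:
  assumes wf: "wf_otm NM M" and c0: "fst c0 < NM" "sinv loA hiA i (hdc c0)"
    and ns: "\<forall>t'<t. stop_of M ((step Or M ^^ t') c0) = None"
  shows "\<exists>lo hi. reach Or (lfm M NM) (simc z i b loA hiA c0) (simc z i b lo hi ((step Or M ^^ t) c0)) (4 * t)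
     \<and> sinv lo hi i (hdc ((step Or M ^^ t) c0))"
  using ns
proof (induction t)
  case 0 then show ?case using c0 by (auto intro: reach_refl)
next
  case (Suc t)
  then obtain lo hi where IH: "reach Or (lfm M NM) (simc z i b loA hiA c0) (simc z i b lo hi ((step Or M ^^ t) c0)) (4 * t)"
      "sinv lo hi i (hdc ((step Or M ^^ t) c0))" by auto
  obtain q t1 h1 t2 h2 where ct: "(step Or M ^^ t) c0 = (q, t1, h1, t2, h2)" by (cases "(step Or M ^^ t) c0") auto
  have q: "q < NM" using wf_pow[OF wf c0(1), where Or = Or and t = t] ct by simp
  have ns: "stop_of M (q, t1, h1, t2, h2) = None" using Suc.prems ct by (metis lessI)
  have inv: "sinv lo hi i h1" using IH(2) ct by simp
  obtain lo' hi' where st: "reach Or (lfm M NM) (simc z i b lo hi (q, t1, h1, t2, h2))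
            (simc z i b lo' hi' (step Or M (q, t1, h1, t2, h2))) 4"
          "sinv lo' hi' i (hdc (step Or M (q, t1, h1, t2, h2)))"
    using sim_step[OF q ns inv, of Or z b] by blast
  have e: "(step Or M ^^ Suc t) c0 = step Or M (q, t1, h1, t2, h2)" using ct by simp
  show ?case using reach_trans[OF IH(1)[unfolded ct] st(1)] st(2) unfolding e
    by (intro exI[of _ lo'] exI[of _ hi']) (simp add: algebra_simps)
qed

lemma post_phase:
  assumes q: "q < NM" and st: "M q (W h) (tq hq) = Stop bb" and inv: "sinv lo hi i h"
  shows "reach Or (lfm M NM) (simc z i b lo hi (q, W, h, tq, hq)) (Pd b, dbl z W (mkr lo hi (int i)), z + 2 * int i, tq, hq)
           (2 * nat \<bar>h - int i\<bar> + 2)"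
    and "stopd (lfm M NM) (Pd b, dbl z W (mkr lo hi (int i)), z + 2 * int i, tq, hq) = Some (bitb b (W (int i)))"
proof -
  let ?g = "mkr lo hi (int i)"
  let ?D = "dbl z W ?g"
  let ?LM = "lfm M NM"
  have a: "stp Or ?LM (simc z i b lo hi (q, W, h, tq, hq)) = (Pa b, ?D, z + 2 * h + 1, tq, hq)"
    using q st by (simp add: stp.simps)
  have w: "reach Or ?LM (Pa b, ?D, z + 2 * h + 1, tq, hq) (Pa b, ?D, z + 2 * int i + 1, tq, hq) (2 * nat \<bar>h - int i\<bar>)"
  proof (cases "h < int i")
    case True
    have w: "reach Or ?LM (Pa b, ?D, z + 2 * h + 1, tq, hq) (Pa b, ?D, z + 2 * h + 1 + 2 * dsg Rgt * int (nat (int i - h)), tq, hq) (2 * nat (int i - h))"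
    proof (rule walk2[where A = "{S0}" and Y = "Pb b"])
      fix j assume j: "j < nat (int i - h)"
      show "?D (z + 2 * h + 1 + 2 * dsg Rgt * int j) \<in> {S0}" using j inv unfolding sinv_def
        by (subst dbl_od[where c = "h + int j"]) (auto simp: mkr_def)
    qed auto
    have e2: "nat (int i - h) = nat \<bar>h - int i\<bar>" using True by simp
    have e: "z + 2 * h + 1 + 2 * dsg Rgt * int (nat \<bar>h - int i\<bar>) = z + 2 * int i + 1" using True by simp
    show ?thesis using w unfolding e2 e .
  next
    case False
    have w: "reach Or ?LM (Pa b, ?D, z + 2 * h + 1, tq, hq) (Pa b, ?D, z + 2 * h + 1 + 2 * dsg Lft * int (nat (h - int i)), tq, hq) (2 * nat (h - int i))"
    proof (rule walk2[where A = "{Hash}" and Y = "Pc b"])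
      fix j assume j: "j < nat (h - int i)"
      show "?D (z + 2 * h + 1 + 2 * dsg Lft * int j) \<in> {Hash}" using j inv unfolding sinv_def
        by (subst dbl_od[where c = "h - int j"]) (auto simp: mkr_def)
    qed auto
    have e2: "nat (h - int i) = nat \<bar>h - int i\<bar>" using False by simp
    have e: "z + 2 * h + 1 + 2 * dsg Lft * int (nat \<bar>h - int i\<bar>) = z + 2 * int i + 1" using False by simp
    show ?thesis using w unfolding e2 e .
  qed
  have "?D (z + 2 * int i + 1) = S1" using inv unfolding sinv_def by (simp add: mkr_def)
  then have c: "stp Or ?LM (Pa b, ?D, z + 2 * int i + 1, tq, hq) = (Pd b, ?D, z + 2 * int i, tq, hq)"
    by (simp add: stp.simps)
  show "reach Or ?LM (simc z i b lo hi (q, W, h, tq, hq)) (Pd b, ?D, z + 2 * int i, tq, hq) (2 * nat \<bar>h - int i\<bar> + 2)"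
    using reach_step[OF a reach_trans[OF w reach_step1[OF c]]] by simp
  show "stopd ?LM (Pd b, ?D, z + 2 * int i, tq, hq) = Some (bitb b (W (int i)))"
    by simp
qed


definition tsM :: "(nat \<Rightarrow> lang) \<Rightarrow> otm \<Rightarrow> nat \<Rightarrow> nat" where
  "tsM Or M n = (LEAST t. stop_of M (run Or M (replicate n S1) t) \<noteq> None)"

definition WfM :: "(nat \<Rightarrow> lang) \<Rightarrow> otm \<Rightarrow> nat \<Rightarrow> int \<Rightarrow> sym" where
  "WfM Or M n = work_tape (run Or M (replicate n S1) (tsM Or M n))"

definition LFL :: "(nat \<Rightarrow> lang) \<Rightarrow> otm \<Rightarrow> lang" where
  "LFL Or M = {replicate m S1 | m. bitb (odd m) (WfM Or M (fst (dec (m div 2))) (int (snd (dec (m div 2)))))}"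

lemma run_Suc: "run Or M x (Suc t) = step Or M (run Or M x t)"
  unfolding run_def by simp

lemma run_add: "run Or M x (t + d) = (step Or M ^^ d) (run Or M x t)"
  unfolding run_def by (simp add: add.commute[of t d] funpow_add)

lemma adv_facts:
  assumes adv: "computes_advice_in Or M k a"
  shows "tsM Or M n \<le> (n + 2) ^ k"
    and "stop_of M (run Or M (replicate n S1) (tsM Or M n)) \<noteq> None"
    and "content (WfM Or M n) = a n"
proof -
  obtain t where t: "t \<le> (n + 2) ^ k" "stop_of M (run Or M (replicate n S1) t) \<noteq> None"
      "content (work_tape (run Or M (replicate n S1) t)) = a n"
    using adv unfolding computes_advice_in_def by blast
  have le: "tsM Or M n \<le> t" unfolding tsM_def by (rule Least_le) (rule t(2))
  then show "tsM Or M n \<le> (n + 2) ^ k" using t(1) by simp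
  show st: "stop_of M (run Or M (replicate n S1) (tsM Or M n)) \<noteq> None"
    unfolding tsM_def by (rule LeastI) (rule t(2))
  have "run Or M (replicate n S1) t = run Or M (replicate n S1) (tsM Or M n)"
    using run_add[of Or M "replicate n S1" "tsM Or M n" "t - tsM Or M n"] le stop_fix_pow[OF st] by simp
  then show "content (WfM Or M n) = a n" using t(3) unfolding WfM_def by simp
qed

lemma before_stop:
  "t' < tsM Or M n \<Longrightarrow> stop_of M (run Or M (replicate n S1) t') = None"
  unfolding tsM_def using not_less_Least by blast

lemma pow68: "(X::nat) ^ 6 * X ^ (k + 2) = X ^ (k + 8)"
proof -
  have "X ^ 6 * X ^ (k + 2) = X ^ (6 + (k + 2))" by (simp only: power_add)
  moreover have "6 + (k + 2) = k + 8" by simp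
  ultimately show ?thesis by (simp only:)
qed

lemma big_bound:
  fixes m T k :: nat
  assumes "T \<le> (m + 2) ^ k"
  shows "m + 5 + m * (4 * m + 21) + 1 + 4 * T + (2 * (T + m) + 2) \<le> (m + 2) ^ (k + 8)"
proof -
  let ?X = "m + 2"
  have X2: "2 \<le> ?X" by simp
  have "m + 5 + m * (4 * m + 21) + 1 + 4 * T + (2 * (T + m) + 2) \<le> 30 * ?X ^ 2 + 6 * ?X ^ k"
    using assms by (simp add: power2_eq_square algebra_simps)
  also have "\<dots> \<le> 30 * ?X ^ (k + 2) + 6 * ?X ^ (k + 2)"
  proof -
    have "?X ^ 2 \<le> ?X ^ (k + 2)" by (rule power_increasing) simp_all
    moreover have "?X ^ k \<le> ?X ^ (k + 2)" by (rule power_increasing) simp_all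
    ultimately show ?thesis by simp
  qed
  also have "\<dots> = 36 * ?X ^ (k + 2)" by simp
  also have "\<dots> \<le> ?X ^ 6 * ?X ^ (k + 2)"
  proof -
    have "(36::nat) \<le> 2 ^ 6" by simp
    also have "(2::nat) ^ 6 \<le> ?X ^ 6" by (rule power_mono) simp_all
    finally have "36 \<le> ?X ^ 6" .
    then show ?thesis by (rule mult_le_mono1)
  qed
  also have "\<dots> = ?X ^ (k + 8)" by (rule pow68)
  finally show ?thesis .
qed

theorem LF_unary:
  assumes wf: "wf_otm NM M" and adv: "computes_advice_in Or M k a"
  shows "\<exists>r. reach Or (lfm M NM) (initc Cp (replicate m S1)) r ((m + 2) ^ (k + 8))
           \<and> stopd (lfm M NM) r = Some (replicate m S1 \<in> LFL Or M)"
proof -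
  let ?LM = "lfm M NM"
  let ?z = "int m"
  let ?b = "odd m"
  obtain n i where ni: "dec (m div 2) = (n, i)" by (cases "dec (m div 2)") auto
  have r1: "reach Or ?LM (initc Cp (replicate m S1)) (Lp False, LamP ?z (0, 0), ?z, ones m, ?z - 1) (m + 5)"
    unfolding initc_def by (rule pre_unary)
  have r2: "reach Or ?LM (Lp False, LamP ?z (0, 0), ?z, ones m, ?z - 1) (Lp ?b, LamP ?z (n, i), ?z, ones 0, -1) (m * (4 * m + 21))"
    using loop_phase[where Or = Or and M = M and NM = NM and u = 0 and z = ?z and r = m] ni by (simp add: dec_def)
  let ?x = "replicate n S1"
  let ?c0 = "(0::nat, init_tape ?x, 0::int, (\<lambda>_::int. Blank), 0::int)"
  have Lz: "LamP ?z (n, i) = dbl ?z (init_tape ?x) (mkr (-1) (int i) (int i))"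
    unfolding LamP_def Lam_def ones_init by simp
  have a: "stp Or ?LM (Lp ?b, LamP ?z (n, i), ?z, ones 0, -1) = simc ?z i ?b (-1) (int i) ?c0"
    using Lz by (simp add: stp.simps ones_def content_blank)
  let ?T = "tsM Or M n"
  have c0: "run Or M ?x 0 = ?c0" unfolding run_def by simp
  have NM: "0 < NM" using wf unfolding wf_otm_def by simp
  have ns: "\<forall>t'<?T. stop_of M ((step Or M ^^ t') ?c0) = None"
    using before_stop[of _ Or M n] unfolding run_def by simp
  obtain lo hi where sr: "reach Or ?LM (simc ?z i ?b (-1) (int i) ?c0) (simc ?z i ?b lo hi ((step Or M ^^ ?T) ?c0)) (4 * ?T)"
      "sinv lo hi i (hdc ((step Or M ^^ ?T) ?c0))"
    using sim_run[OF wf _ _ ns, where loA = "-1" and hiA = "int i" and z = ?z and b = ?b and i = i] NM by (auto simp: sinv_def)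
  obtain q W h t2 h2 where cT: "(step Or M ^^ ?T) ?c0 = (q, W, h, t2, h2)" by (cases "(step Or M ^^ ?T) ?c0") auto
  have W: "W = WfM Or M n" unfolding WfM_def run_def using cT by simp
  have stp: "stop_of M (q, W, h, t2, h2) \<noteq> None" using adv_facts(2)[OF adv, of n] cT unfolding run_def by simp
  then obtain bb where Mst: "M q (W h) (t2 h2) = Stop bb" by (cases "M q (W h) (t2 h2)") auto
  have q: "q < NM" using wf_pow[OF wf, where c = ?c0 and Or = Or and t = ?T] NM cT by simp
  have inv: "sinv lo hi i h" using sr(2) cT by simp
  have hb: "\<bar>h\<bar> \<le> int ?T" using hd_pow[where Or = Or and M = M and t = ?T and c = ?c0] cT by simp
  have ib: "i \<le> m" using dec_sum[of "m div 2"] ni by simp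
  have pp: "reach Or ?LM (simc ?z i ?b lo hi (q, W, h, t2, h2)) (Pd ?b, dbl ?z W (mkr lo hi (int i)), ?z + 2 * int i, t2, h2)
           (2 * nat \<bar>h - int i\<bar> + 2)"
    and ps: "stopd ?LM (Pd ?b, dbl ?z W (mkr lo hi (int i)), ?z + 2 * int i, t2, h2) = Some (bitb ?b (W (int i)))"
    using post_phase(1)[where q = q and NM = NM and M = M and W = W and h = h and tq = t2 and hq = h2 and bb = bb
        and lo = lo and hi = hi and i = i and Or = Or and z = ?z and b = ?b, OF q Mst inv]
      post_phase(2)[where q = q and NM = NM and M = M and W = W and h = h and tq = t2 and hq = h2 and bb = bb
        and lo = lo and hi = hi and i = i and z = ?z and b = ?b, OF q Mst inv] by auto
  have hb2: "nat \<bar>h - int i\<bar> \<le> ?T + m" using hb ib by linarith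
  have Tb: "?T \<le> (m + 2) ^ k"
  proof -
    have "n \<le> m" using dec_sum[of "m div 2"] ni by simp
    then have "(n + 2) ^ k \<le> (m + 2) ^ k" by (intro power_mono) simp_all
    then show ?thesis using adv_facts(1)[OF adv, of n] by simp
  qed
  have all: "reach Or ?LM (initc Cp (replicate m S1)) (Pd ?b, dbl ?z W (mkr lo hi (int i)), ?z + 2 * int i, t2, h2)
      (m + 5 + m * (4 * m + 21) + 1 + 4 * ?T + (2 * (?T + m) + 2))"
  proof -
    have "reach Or ?LM (initc Cp (replicate m S1)) (Pd ?b, dbl ?z W (mkr lo hi (int i)), ?z + 2 * int i, t2, h2)
      (m + 5 + m * (4 * m + 21) + 1 + 4 * ?T + (2 * nat \<bar>h - int i\<bar> + 2))"
      using reach_trans[OF reach_trans[OF reach_trans[OF r1 r2] reach_step1[OF a]] reach_trans[OF sr(1)[unfolded cT] pp]]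
      by (simp add: algebra_simps)
    then show ?thesis by (rule reach_mono) (use hb2 in simp)
  qed
  have mem: "(replicate m S1 \<in> LFL Or M) = bitb ?b (W (int i))"
    unfolding LFL_def W using ni by auto
  have "stopd ?LM (Pd ?b, dbl ?z W (mkr lo hi (int i)), ?z + 2 * int i, t2, h2) = Some (replicate m S1 \<in> LFL Or M)"
    using ps mem by simp
  then show ?thesis
    using reach_mono[OF all big_bound[OF Tb]] by blast
qed


theorem LF_dec:
  assumes wf: "wf_otm NM M" and adv: "computes_advice_in Or M k a" and x: "nonblank x"
  shows "\<exists>r. reach Or (lfm M NM) (initc Cp x) r ((length x + 2) ^ (k + 8))
           \<and> stopd (lfm M NM) r = Some (x \<in> LFL Or M)"
proof (cases "\<forall>j<length x. x ! j = S1")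
  case True
  then have "x = replicate (length x) S1" by (intro nth_equalityI) auto
  then show ?thesis using LF_unary[OF wf adv, of "length x"] by metis
next
  case False
  then obtain c0 where "c0 < length x" "x ! c0 \<noteq> S1" by blast
  define c where "c = (LEAST c. c < length x \<and> x ! c \<noteq> S1)"
  have c: "c < length x" "x ! c \<noteq> S1" unfolding c_def
    using LeastI[of "\<lambda>c. c < length x \<and> x ! c \<noteq> S1" c0] \<open>c0 < length x\<close> \<open>x ! c0 \<noteq> S1\<close> by auto
  have pre: "\<forall>j<c. x ! j = S1"
  proof (intro allI impI)
    fix j assume "j < c"
    then show "x ! j = S1" using not_less_Least[of j "\<lambda>c. c < length x \<and> x ! c \<noteq> S1"] c(1) unfolding c_def[symmetric] by auto
  qed
  let ?W = "\<lambda>p. if 0 \<le> p \<and> p < int c then Blank else init_tape x p"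
  have r: "reach Or (lfm M NM) (Cp, init_tape x, 0, (\<lambda>_. Blank), 0) (Cp, ?W, int c, ones c, int c) c"
    using copy_phase[of c x Or M NM] c pre by simp
  have xc: "x ! c \<noteq> Blank" using x c(1) unfolding nonblank_def using nth_mem by fastforce
  have Wc: "?W (int c) = x ! c" using c(1) by (simp add: init_tape_def)
  have st: "stopd (lfm M NM) (Cp, ?W, int c, ones c, int c) = Some False"
    using Wc xc c(2) by simp
  have notin: "x \<notin> LFL Or M"
  proof
    assume "x \<in> LFL Or M"
    then obtain m where "x = replicate m S1" unfolding LFL_def by blast
    then show False using c by simp
  qed
  have "c \<le> (length x + 2) ^ (k + 8)"
  proof -
    have "c \<le> length x + 2" using c by simp
    also have "\<dots> \<le> (length x + 2) ^ (k + 8)" by (rule self_le_power) simp_all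
    finally show ?thesis .
  qed
  then have "reach Or (lfm M NM) (initc Cp x) (Cp, ?W, int c, ones c, int c) ((length x + 2) ^ (k + 8))"
    using reach_mono[OF r] unfolding initc_def by blast
  moreover have "stopd (lfm M NM) (Cp, ?W, int c, ones c, int c) = Some (x \<in> LFL Or M)" using st notin by simp
  ultimately show ?thesis by blast
qed

definition vset :: "nat \<Rightarrow> fs set" where
  "vset NM = set [Cp, Ia, Ib, Ic, Id, Sa, Sb0, Sb, Sc, Sd, Se, Sf, Ta, Tb, Tc, Td, Te, Tf, Ua, Ub, Uc, Ud, Ue, Uf]
     \<union> (\<Union>b. {Lp b, Sg b, Sh b, Si b, Sj b, Pa b, Pb b, Pc b, Pd b})
     \<union> (\<Union>b. \<Union>q\<in>{..<NM}. {Sm q b, Ra q b, Rb q b, Rc q b, La q b, Lb q b, Lc q b})"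

lemma vset_finite: "finite (vset NM)"
  unfolding vset_def by simp

lemma vset_closed:
  assumes wf: "wf_otm NM M"
  shows "\<forall>s\<in>vset NM. \<forall>a c. tgd (lfm M NM s a c) \<subseteq> vset NM"
proof (intro ballI allI)
  fix s a c assume s: "s \<in> vset NM"
  have NM: "0 < NM" using wf unfolding wf_otm_def by simp
  show "tgd (lfm M NM s a c) \<subseteq> vset NM"
  proof (cases s)
    case (Sm q b)
    then have q: "q < NM" using s unfolding vset_def by auto
    have tg: "\<forall>q'\<in>targets (M q a c). q' < NM" using wf q unfolding wf_otm_def by blast
    show ?thesis
    proof (cases "M q a c")
      case (Move q' s1 d1 s2 d2)
      then show ?thesis using Sm q tg by (cases d1) (auto simp: vset_def)
    next
      case (Ask j qy qn)
      then show ?thesis using Sm q tg by (auto simp: vset_def)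
    next
      case (Stop x)
      then show ?thesis using Sm q by (auto simp: vset_def)
    qed
  qed (use s NM in \<open>auto simp: vset_def\<close>)
qed

theorem LF_in_P:
  assumes wf: "wf_otm NM M" and adv: "computes_advice_in Or M k a"
  shows "P_oracle Or (LFL Or M)"
proof -
  have "\<exists>Mn N. wf_otm N Mn \<and> decides_in Or Mn (k + 8) (LFL Or M)"
  proof (rule P_from_dt[where V = "vset NM" and sA = Cp and M = "lfm M NM"])
    show "finite (vset NM)" by (rule vset_finite)
    show "Cp \<in> vset NM" unfolding vset_def by simp
    show "\<forall>s\<in>vset NM. \<forall>a b. tgd (lfm M NM s a b) \<subseteq> vset NM" by (rule vset_closed[OF wf])
    show "\<forall>x. nonblank x \<longrightarrow> (\<exists>r. reach Or (lfm M NM) (initc Cp x) r ((length x + 2) ^ (k + 8)) \<and> stopd (lfm M NM) r = Some (x \<in> LFL Or M))"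
      using LF_dec[OF wf adv] by blast
  qed
  moreover have "\<forall>w\<in>LFL Or M. nonblank w" unfolding LFL_def nonblank_def by auto
  ultimately show ?thesis unfolding P_oracle_def by blast
qed


datatype ms = Bc | Ga0 bool bool | Ga bool bool | Xw bool bool | Xw2 bool bool | Gb bool bool | Ou bool bool
  | Iw sym bool bool | Iw2 sym bool bool | Kw sym bool bool | Qa bool | Dc bool bool
  | Fa0 | Fa | Fc | Yes | No

fun sdec :: "bool \<Rightarrow> bool \<Rightarrow> sym" where
  "sdec False False = Blank" | "sdec True False = S1" | "sdec False True = S0" | "sdec True True = Hash"

lemma sdec_bitb: "sdec (bitb False s) (bitb True s) = s"
  by (cases s) auto

fun mm :: "ms \<Rightarrow> sym \<Rightarrow> sym \<Rightarrow> ms act" where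
  "mm Bc a c = (if a = Blank then Mv (Ga0 False False) Hash Rgt c Stay else if a = Hash then St False else Mv Bc a Rgt c Stay)"
| "mm (Ga0 b e) a c = Mv (Ga b e) a Lft c Stay"
| "mm (Ga b e) a c = (if a = Blank then Mv (Xw b e) a Rgt c Stay else Mv (Ga b e) a Lft c Stay)"
| "mm (Xw b e) a c = (if a = Hash then Mv (Gb b e) a Lft c Stay else Mv (Xw2 b e) a Stay S1 Rgt)"
| "mm (Xw2 b e) a c = Mv (Xw b e) a Rgt S1 Rgt"
| "mm (Gb b e) a c = (if a = Blank then Mv (Ou b e) a Rgt c Stay else Mv (Gb b e) a Lft c Stay)"
| "mm (Ou b e) a c = (if a = Blank then (if b then Mv (Qa e) a Stay S1 Rgt else Ak 1 (Ga0 True True) (Ga0 True False))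
      else Mv (Iw a b e) Blank Lft c Stay)"
| "mm (Iw s b e) a c = (if a = Blank then Mv (Kw s b e) a Rgt c Stay else Mv (Iw2 s b e) a Stay S1 Rgt)"
| "mm (Iw2 s b e) a c = Mv (Iw s b e) a Lft S1 Rgt"
| "mm (Kw s b e) a c = (if a = Blank then Mv (Ou b e) s Rgt c Stay else Mv (Kw s b e) a Rgt c Stay)"
| "mm (Qa e) a c = Ak 1 (Dc e True) (Dc e False)"
| "mm (Dc e f) a c = (if sdec e f = Blank then Mv Fa0 a Stay c Stay else Mv (Ga0 False False) (sdec e f) Rgt c Stay)"
| "mm Fa0 a c = Mv Fa a Lft c Stay"
| "mm Fa a c = (if a = Blank then Mv Fc a Rgt c Stay else Mv Fa a Lft c Stay)"
| "mm Fc a c = (if a = Blank then Ak 0 Yes No else Mv Fc a Rgt a Rgt)"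
| "mm Yes a c = St True"
| "mm No a c = St False"

lemma ones0: "ones 0 = (\<lambda>_. Blank)"
  by (rule ext) (simp add: ones_def)

lemma it_in: "j < length w \<Longrightarrow> init_tape w (int j) = w ! j"
  by (simp add: init_tape_def)

lemma it_neg: "p < 0 \<Longrightarrow> init_tape w p = Blank"
  by (simp add: init_tape_def)

lemma it_end: "init_tape w (int (length w)) = Blank"
  by (simp add: init_tape_def)

lemma it_app: "(init_tape w)(int (length w) := s) = init_tape (w @ [s])"
  by (rule ext) (auto simp: init_tape_def nth_append)

lemma goleft:
  assumes "Blank \<notin> set w" "\<And>a c. a \<noteq> Blank \<Longrightarrow> M X a c = Mv X a Lft c Stay"
  shows "reach Or M (X, init_tape w, int (length w) - 1, Q, qh) (X, init_tape w, -1, Q, qh) (length w)"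
proof -
  have "reach Or M (X, init_tape w, int (length w) - 1, Q, qh) (X, init_tape w, int (length w) - 1 + dsg Lft * int (length w), Q, qh) (length w)"
  proof (rule walk1[where A = "- {Blank}"])
    fix j assume j: "j < length w"
    have e: "int (length w) - 1 + dsg Lft * int j = int (length w - 1 - j)" using j by simp
    have lt: "length w - 1 - j < length w" using j by simp
    then have "w ! (length w - 1 - j) \<in> set w" by (rule nth_mem)
    then have "w ! (length w - 1 - j) \<noteq> Blank" using assms(1) by auto
    then show "init_tape w (int (length w) - 1 + dsg Lft * int j) \<in> - {Blank}" unfolding e it_in[OF lt] by simp
  qed (use assms(2) in auto)
  then show ?thesis by simp
qed


lemma goleftk:
  assumes "Blank \<notin> set w" "k \<le> length w" "\<And>a c. a \<noteq> Blank \<Longrightarrow> M X a c = Mv X a Lft c Stay"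
  shows "reach Or M (X, init_tape w, int k - 1, Q, qh) (X, init_tape w, -1, Q, qh) k"
proof -
  have "reach Or M (X, init_tape w, int k - 1, Q, qh) (X, init_tape w, int k - 1 + dsg Lft * int k, Q, qh) k"
  proof (rule walk1[where A = "- {Blank}"])
    fix j assume j: "j < k"
    have e: "int k - 1 + dsg Lft * int j = int (k - 1 - j)" using j by simp
    have lt: "k - 1 - j < length w" using j assms(2) by simp
    then have "w ! (k - 1 - j) \<in> set w" by (rule nth_mem)
    then have "w ! (k - 1 - j) \<noteq> Blank" using assms(1) by auto
    then show "init_tape w (int k - 1 + dsg Lft * int j) \<in> - {Blank}" unfolding e it_in[OF lt] by simp
  qed (use assms(3) in auto)
  then show ?thesis by simp
qed

lemma goright:
  assumes "Blank \<notin> set w" "k \<le> length w" "\<And>a c. a \<noteq> Blank \<Longrightarrow> M X a c = Mv X a Rgt c Stay"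
  shows "reach Or M (X, init_tape w, 0, Q, qh) (X, init_tape w, int k, Q, qh) k"
proof -
  have "reach Or M (X, init_tape w, 0, Q, qh) (X, init_tape w, 0 + dsg Rgt * int k, Q, qh) k"
  proof (rule walk1[where A = "- {Blank}"])
    fix j assume j: "j < k"
    have lt: "j < length w" using j assms(2) by simp
    then have "w ! j \<in> set w" by (rule nth_mem)
    then have "w ! j \<noteq> Blank" using assms(1) by auto
    then show "init_tape w (0 + dsg Rgt * int j) \<in> - {Blank}" using it_in[OF lt] by simp
  qed (use assms(3) in auto)
  then show ?thesis by simp
qed

definition sumto :: "nat \<Rightarrow> nat" where
  "sumto p = (\<Sum>j<p. j)"

lemma sumto_Suc: "sumto (Suc p) = sumto p + p"
  unfolding sumto_def by simp

lemma sumto_tri: "sumto (Suc s) = tri s"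
  by (induction s) (auto simp: sumto_Suc tri_Suc, simp add: sumto_def tri_def)

lemma xwalk:
  assumes "\<forall>j<k. w ! j \<in> {S0, S1}" "k \<le> length w"
  shows "reach Or mm (Xw b e, init_tape w, 0, ones 0, 0) (Xw b e, init_tape w, int k, ones (2 * k), int (2 * k)) (2 * k)"
  using assms
proof (induction k)
  case 0 then show ?case by (simp add: reach_refl)
next
  case (Suc k)
  then have IH: "reach Or mm (Xw b e, init_tape w, 0, ones 0, 0) (Xw b e, init_tape w, int k, ones (2 * k), int (2 * k)) (2 * k)"
    by simp
  have a: "init_tape w (int k) \<in> {S0, S1}" using Suc.prems it_in[of k w] by simp
  have s1: "stp Or mm (Xw b e, init_tape w, int k, ones (2 * k), int (2 * k)) = (Xw2 b e, init_tape w, int k, ones (2 * k + 1), int (2 * k + 1))"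
  proof -
    have "(ones (2 * k))(int (2 * k) := S1) = ones (2 * k + 1)" by (rule ext) (auto simp: ones_def)
    then show ?thesis using a by (auto simp: stp.simps)
  qed
  have s2: "stp Or mm (Xw2 b e, init_tape w, int k, ones (2 * k + 1), int (2 * k + 1)) = (Xw b e, init_tape w, int (Suc k), ones (2 * Suc k), int (2 * Suc k))"
  proof -
    have "(ones (2 * k + 1))(int (2 * k + 1) := S1) = ones (2 * Suc k)" by (rule ext) (auto simp: ones_def)
    then show ?thesis by (auto simp: stp.simps)
  qed
  have "reach Or mm (Xw b e, init_tape w, int k, ones (2 * k), int (2 * k)) (Xw b e, init_tape w, int (Suc k), ones (2 * Suc k), int (2 * Suc k)) 2"
    using reach_step[OF s1 reach_step1[OF s2]] by (simp add: numeral_eq_Suc)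
  from reach_trans[OF IH this] show ?case by simp
qed

lemma iwalk:
  assumes "\<forall>j<k. tp (h - int j) \<noteq> Blank"
  shows "reach Or mm (Iw s b e, tp, h, ones Q, int Q) (Iw s b e, tp, h - int k, ones (Q + 2 * k), int (Q + 2 * k)) (2 * k)"
  using assms
proof (induction k)
  case 0 then show ?case by (simp add: reach_refl)
next
  case (Suc k)
  then have IH: "reach Or mm (Iw s b e, tp, h, ones Q, int Q) (Iw s b e, tp, h - int k, ones (Q + 2 * k), int (Q + 2 * k)) (2 * k)"
    by simp
  have a: "tp (h - int k) \<noteq> Blank" using Suc.prems by simp
  have s1: "stp Or mm (Iw s b e, tp, h - int k, ones (Q + 2 * k), int (Q + 2 * k)) = (Iw2 s b e, tp, h - int k, ones (Q + 2 * k + 1), int (Q + 2 * k + 1))"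
  proof -
    have "(ones (Q + 2 * k))(int (Q + 2 * k) := S1) = ones (Q + 2 * k + 1)" by (rule ext) (auto simp: ones_def)
    then show ?thesis using a by (auto simp: stp.simps)
  qed
  have s2: "stp Or mm (Iw2 s b e, tp, h - int k, ones (Q + 2 * k + 1), int (Q + 2 * k + 1)) = (Iw s b e, tp, h - int (Suc k), ones (Q + 2 * Suc k), int (Q + 2 * Suc k))"
  proof -
    have "(ones (Q + 2 * k + 1))(int (Q + 2 * k + 1) := S1) = ones (Q + 2 * Suc k)" by (rule ext) (auto simp: ones_def)
    then show ?thesis by (auto simp: stp.simps)
  qed
  have "reach Or mm (Iw s b e, tp, h - int k, ones (Q + 2 * k), int (Q + 2 * k)) (Iw s b e, tp, h - int (Suc k), ones (Q + 2 * Suc k), int (Q + 2 * Suc k)) 2"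
    using reach_step[OF s1 reach_step1[OF s2]] by (simp add: numeral_eq_Suc)
  from reach_trans[OF IH this] show ?case by simp
qed

lemma outer_step:
  assumes bl: "Blank \<notin> set w" and p: "p < length w"
  shows "reach Or mm (Ou b e, init_tape w, int p, ones Q, int Q) (Ou b e, init_tape w, int p + 1, ones (Q + 2 * p), int (Q + 2 * p)) (3 * p + 3)"
proof -
  let ?s = "w ! p"
  let ?T = "(init_tape w)(int p := Blank)"
  have sne: "?s \<noteq> Blank" using bl p nth_mem by fastforce
  have a: "stp Or mm (Ou b e, init_tape w, int p, ones Q, int Q) = (Iw ?s b e, ?T, int p - 1, ones Q, int Q)"
    using sne it_in[OF p] by (simp add: stp.simps)
  have nb: "\<forall>j<p. ?T (int p - 1 - int j) \<noteq> Blank"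
  proof (intro allI impI)
    fix j assume j: "j < p"
    have e: "int p - 1 - int j = int (p - 1 - j)" using j by simp
    have lt: "p - 1 - j < length w" using j p by simp
    have "w ! (p - 1 - j) \<noteq> Blank" using bl lt nth_mem by fastforce
    then show "?T (int p - 1 - int j) \<noteq> Blank" unfolding e using j it_in[OF lt] by simp
  qed
  have b: "reach Or mm (Iw ?s b e, ?T, int p - 1, ones Q, int Q) (Iw ?s b e, ?T, int p - 1 - int p, ones (Q + 2 * p), int (Q + 2 * p)) (2 * p)"
    by (rule iwalk) (use nb in simp)
  have c: "stp Or mm (Iw ?s b e, ?T, -1, ones (Q + 2 * p), int (Q + 2 * p)) = (Kw ?s b e, ?T, 0, ones (Q + 2 * p), int (Q + 2 * p))"
    by (simp add: stp.simps it_neg)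
  have d: "reach Or mm (Kw ?s b e, ?T, 0, ones (Q + 2 * p), int (Q + 2 * p)) (Kw ?s b e, ?T, 0 + dsg Rgt * int p, ones (Q + 2 * p), int (Q + 2 * p)) p"
  proof (rule walk1[where A = "- {Blank}"])
    fix j assume j: "j < p"
    have lt: "j < length w" using j p by simp
    have "w ! j \<noteq> Blank" using bl lt nth_mem by fastforce
    then show "?T (0 + dsg Rgt * int j) \<in> - {Blank}" using j it_in[OF lt] by simp
  qed auto
  have f: "stp Or mm (Kw ?s b e, ?T, int p, ones (Q + 2 * p), int (Q + 2 * p)) = (Ou b e, init_tape w, int p + 1, ones (Q + 2 * p), int (Q + 2 * p))"
  proof -
    have "?T(int p := ?s) = init_tape w" using it_in[OF p] by (rule_tac ext) auto
    then show ?thesis by (simp add: stp.simps)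
  qed
  have e1: "int p - 1 - int p = -1" by simp
  have e2: "0 + dsg Rgt * int p = int p" by simp
  have "reach Or mm (Ou b e, init_tape w, int p, ones Q, int Q) (Ou b e, init_tape w, int p + 1, ones (Q + 2 * p), int (Q + 2 * p)) (Suc (2 * p + Suc (p + 1)))"
    using reach_step[OF a reach_trans[OF b[unfolded e1] reach_step[OF c reach_trans[OF d[unfolded e2] reach_step1[OF f]]]]] .
  then show ?thesis by (rule reach_mono) simp
qed

lemma triangle:
  assumes bl: "Blank \<notin> set w" and p: "p \<le> length w"
  shows "reach Or mm (Ou b e, init_tape w, 0, ones Q, int Q) (Ou b e, init_tape w, int p, ones (Q + 2 * sumto p), int (Q + 2 * sumto p)) (p * (3 * p + 3))"
  using p
proof (induction p)
  case 0 then show ?case by (simp add: reach_refl sumto_def)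
next
  case (Suc p)
  then have IH: "reach Or mm (Ou b e, init_tape w, 0, ones Q, int Q) (Ou b e, init_tape w, int p, ones (Q + 2 * sumto p), int (Q + 2 * sumto p)) (p * (3 * p + 3))"
    by simp
  have "reach Or mm (Ou b e, init_tape w, int p, ones (Q + 2 * sumto p), int (Q + 2 * sumto p))
      (Ou b e, init_tape w, int p + 1, ones (Q + 2 * sumto p + 2 * p), int (Q + 2 * sumto p + 2 * p)) (3 * p + 3)"
    by (rule outer_step[where Q = "Q + 2 * sumto p", OF bl]) (use Suc.prems in simp)
  from reach_trans[OF IH this] have r: "reach Or mm (Ou b e, init_tape w, 0, ones Q, int Q)
      (Ou b e, init_tape w, int p + 1, ones (Q + 2 * sumto p + 2 * p), int (Q + 2 * sumto p + 2 * p)) (p * (3 * p + 3) + (3 * p + 3))" .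
  have q1: "Q + 2 * sumto p + 2 * p = Q + 2 * sumto (Suc p)" by (simp add: sumto_Suc)
  have q2: "int p + 1 = int (Suc p)" by simp
  show ?case using r unfolding q1 q2 by (rule reach_mono) (simp add: algebra_simps)
qed


lemma content_ones: "content (ones m) = replicate m S1"
  by (rule content_eq) (auto simp: ones_def)

lemma build:
  assumes x: "set x \<subseteq> {S0, S1}" and p: "Blank \<notin> set p"
  defines "w \<equiv> x @ Hash # p"
  shows "reach Or mm (Ga0 b e, init_tape w, int (length w), ones 0, 0)
     (Ou b e, init_tape w, int (length w), ones (2 * length x + 2 * sumto (length w)), int (2 * length x + 2 * sumto (length w)))
     (4 * (length w + 2) ^ 2)"
proof -
  let ?L = "length w"
  let ?n = "length x"
  have bl: "Blank \<notin> set w" using x p unfolding w_def by auto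
  have a: "stp Or mm (Ga0 b e, init_tape w, int ?L, ones 0, 0) = (Ga b e, init_tape w, int ?L - 1, ones 0, 0)"
    by (simp add: stp.simps)
  have g1: "reach Or mm (Ga b e, init_tape w, int ?L - 1, ones 0, 0) (Ga b e, init_tape w, -1, ones 0, 0) ?L"
    by (rule goleftk[OF bl]) simp_all
  have c: "stp Or mm (Ga b e, init_tape w, -1, ones 0, 0) = (Xw b e, init_tape w, 0, ones 0, 0)"
    by (simp add: stp.simps it_neg)
  have xs: "\<forall>j<?n. w ! j \<in> {S0, S1}" using x unfolding w_def by (auto simp: nth_append dest!: nth_mem)
  have d: "reach Or mm (Xw b e, init_tape w, 0, ones 0, 0) (Xw b e, init_tape w, int ?n, ones (2 * ?n), int (2 * ?n)) (2 * ?n)"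
    by (rule xwalk[OF xs]) (simp add: w_def)
  have wn: "init_tape w (int ?n) = Hash" using it_in[of ?n w] unfolding w_def by simp
  have f: "stp Or mm (Xw b e, init_tape w, int ?n, ones (2 * ?n), int (2 * ?n)) = (Gb b e, init_tape w, int ?n - 1, ones (2 * ?n), int (2 * ?n))"
    using wn by (simp add: stp.simps)
  have g2: "reach Or mm (Gb b e, init_tape w, int ?n - 1, ones (2 * ?n), int (2 * ?n)) (Gb b e, init_tape w, -1, ones (2 * ?n), int (2 * ?n)) ?n"
    by (rule goleftk[OF bl]) (simp_all add: w_def)
  have h: "stp Or mm (Gb b e, init_tape w, -1, ones (2 * ?n), int (2 * ?n)) = (Ou b e, init_tape w, 0, ones (2 * ?n), int (2 * ?n))"
    by (simp add: stp.simps it_neg)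
  have t: "reach Or mm (Ou b e, init_tape w, 0, ones (2 * ?n), int (2 * ?n)) (Ou b e, init_tape w, int ?L, ones (2 * ?n + 2 * sumto ?L), int (2 * ?n + 2 * sumto ?L)) (?L * (3 * ?L + 3))"
    by (rule triangle[OF bl]) simp
  have all: "reach Or mm (Ga0 b e, init_tape w, int ?L, ones 0, 0) (Ou b e, init_tape w, int ?L, ones (2 * ?n + 2 * sumto ?L), int (2 * ?n + 2 * sumto ?L))
     (Suc (?L + Suc (2 * ?n + Suc (?n + Suc (?L * (3 * ?L + 3))))))"
    using reach_step[OF a reach_trans[OF g1 reach_step[OF c reach_trans[OF d reach_step[OF f reach_trans[OF g2 reach_step[OF h t]]]]]]] .
  have nL: "?n \<le> ?L" unfolding w_def by simp
  have "Suc (?L + Suc (2 * ?n + Suc (?n + Suc (?L * (3 * ?L + 3))))) \<le> 4 * (?L + 2) ^ 2"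
    using nL by (simp add: power2_eq_square algebra_simps)
  then show ?thesis using all by (rule reach_mono[rotated])
qed

lemma LFL_mem: "(replicate m S1 \<in> LFL Or M) = bitb (odd m) (WfM Or M (fst (dec (m div 2))) (int (snd (dec (m div 2)))))"
  unfolding LFL_def by auto

lemma iter:
  assumes x: "set x \<subseteq> {S0, S1}" and p: "Blank \<notin> set p"
    and O1: "Oq 1 = LFL Or M"
  defines "w \<equiv> x @ Hash # p"
  defines "s \<equiv> WfM Or M (length x) (int (length p))"
  shows "reach Oq mm (Ga0 False False, init_tape w, int (length w), ones 0, 0)
     (if s = Blank then (Fa0, init_tape w, int (length w), ones 0, 0) else (Ga0 False False, init_tape (w @ [s]), int (length w) + 1, ones 0, 0))
     (9 * (length w + 2) ^ 2)"
proof -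
  let ?L = "length w"
  let ?n = "length x"
  let ?i = "length p"
  let ?E = "tri (?n + ?i) + ?n"
  have L: "?L = Suc (?n + ?i)" unfolding w_def by simp
  have sE: "2 * length x + 2 * sumto (length (x @ Hash # p)) = 2 * ?E"
    using L sumto_tri unfolding w_def by simp
  have b0: "reach Oq mm (Ga0 False False, init_tape w, int ?L, ones 0, 0) (Ou False False, init_tape w, int ?L, ones (2 * ?E), int (2 * ?E)) (4 * (?L + 2) ^ 2)"
    using build[OF x p, of Oq False False] unfolding w_def sE .
  have dE: "dec ?E = (?n, ?i)" by (rule dec_enc)
  let ?b0 = "bitb False s"
  let ?b1 = "bitb True s"
  have m0: "(content (ones (2 * ?E)) \<in> Oq 1) = ?b0"
    unfolding content_ones O1 LFL_mem s_def using dE by simp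
  have a0: "stp Oq mm (Ou False False, init_tape w, int ?L, ones (2 * ?E), int (2 * ?E)) = (Ga0 True ?b0, init_tape w, int ?L, ones 0, 0)"
  proof -
    have "init_tape w (int ?L) = Blank" by (rule it_end)
    then show ?thesis using m0 by (auto simp: stp.simps ones0)
  qed
  have b1: "reach Oq mm (Ga0 True ?b0, init_tape w, int ?L, ones 0, 0) (Ou True ?b0, init_tape w, int ?L, ones (2 * ?E), int (2 * ?E)) (4 * (?L + 2) ^ 2)"
    using build[OF x p, of Oq True ?b0] unfolding w_def sE .
  have q1: "stp Oq mm (Ou True ?b0, init_tape w, int ?L, ones (2 * ?E), int (2 * ?E)) = (Qa ?b0, init_tape w, int ?L, ones (2 * ?E + 1), int (2 * ?E + 1))"
  proof -
    have "init_tape w (int ?L) = Blank" by (rule it_end)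
    moreover have "(ones (2 * ?E))(int (2 * ?E) := S1) = ones (2 * ?E + 1)" by (rule ext) (auto simp: ones_def)
    ultimately show ?thesis by (simp add: stp.simps)
  qed
  have m1: "(content (ones (2 * ?E + 1)) \<in> Oq 1) = ?b1"
  proof -
    have "(2 * ?E + 1) div 2 = ?E" by simp
    then show ?thesis unfolding content_ones O1 LFL_mem s_def using dE by simp
  qed
  have a1: "stp Oq mm (Qa ?b0, init_tape w, int ?L, ones (2 * ?E + 1), int (2 * ?E + 1)) = (Dc ?b0 ?b1, init_tape w, int ?L, ones 0, 0)"
    using m1 by (auto simp: stp.simps ones0)
  have sd: "sdec ?b0 ?b1 = s" by (rule sdec_bitb)
  have dc: "stp Oq mm (Dc ?b0 ?b1, init_tape w, int ?L, ones 0, 0) =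
     (if s = Blank then (Fa0, init_tape w, int ?L, ones 0, 0) else (Ga0 False False, init_tape (w @ [s]), int ?L + 1, ones 0, 0))"
    using sd it_app[of w s] by (simp add: stp.simps)
  have "reach Oq mm (Ga0 False False, init_tape w, int ?L, ones 0, 0)
     (if s = Blank then (Fa0, init_tape w, int ?L, ones 0, 0) else (Ga0 False False, init_tape (w @ [s]), int ?L + 1, ones 0, 0))
     (4 * (?L + 2) ^ 2 + Suc (4 * (?L + 2) ^ 2 + Suc (Suc 1)))"
    using reach_trans[OF b0 reach_step[OF a0 reach_trans[OF b1 reach_step[OF q1 reach_step[OF a1 reach_step1[OF dc]]]]]] .
  then show ?thesis by (rule reach_mono) (simp add: power2_eq_square algebra_simps)
qed


definition pre :: "(int \<Rightarrow> sym) \<Rightarrow> nat \<Rightarrow> sym list" where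
  "pre W i = map (\<lambda>j. W (int j)) [0..<i]"

lemma pre_Suc: "pre W (Suc i) = pre W i @ [W (int i)]"
  unfolding pre_def by simp

lemma loop_main:
  assumes x: "set x \<subseteq> {S0, S1}" and O1: "Oq 1 = LFL Or M"
    and nb: "\<forall>j<i. WfM Or M (length x) (int j) \<noteq> Blank"
  shows "reach Oq mm (Ga0 False False, init_tape (x @ Hash # []), int (length x + 1), ones 0, 0)
     (Ga0 False False, init_tape (x @ Hash # pre (WfM Or M (length x)) i), int (length x + 1 + i), ones 0, 0)
     (i * (9 * (length x + 3 + i) ^ 2))"
  using nb
proof (induction i)
  case 0 then show ?case by (simp add: reach_refl pre_def)
next
  case (Suc i)
  let ?W = "WfM Or M (length x)"
  have IH: "reach Oq mm (Ga0 False False, init_tape (x @ Hash # []), int (length x + 1), ones 0, 0)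
     (Ga0 False False, init_tape (x @ Hash # pre ?W i), int (length x + 1 + i), ones 0, 0)
     (i * (9 * (length x + 3 + i) ^ 2))" using Suc by simp
  have p: "Blank \<notin> set (pre ?W i)"
  proof
    assume "Blank \<in> set (pre ?W i)"
    then obtain j where "j < i" "?W (int j) = Blank" unfolding pre_def by auto
    then show False using Suc.prems less_SucI by blast
  qed
  have lp: "length (pre ?W i) = i" unfolding pre_def by simp
  have s: "?W (int i) \<noteq> Blank" using Suc.prems by simp
  have it: "reach Oq mm (Ga0 False False, init_tape (x @ Hash # pre ?W i), int (length (x @ Hash # pre ?W i)), ones 0, 0)
     (Ga0 False False, init_tape ((x @ Hash # pre ?W i) @ [?W (int i)]), int (length (x @ Hash # pre ?W i)) + 1, ones 0, 0)
     (9 * (length (x @ Hash # pre ?W i) + 2) ^ 2)"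
    using iter[where Oq = Oq and Or = Or and M = M, OF x p O1] s lp by simp
  have e1: "(x @ Hash # pre ?W i) @ [?W (int i)] = x @ Hash # pre ?W (Suc i)" by (simp add: pre_Suc)
  have e2: "int (length (x @ Hash # pre ?W i)) = int (length x + 1 + i)" using lp by simp
  have e3: "int (length x + 1 + i) + 1 = int (length x + 1 + Suc i)" by simp
  have e4: "length (x @ Hash # pre ?W i) + 2 = length x + 3 + i" using lp by simp
  have it': "reach Oq mm (Ga0 False False, init_tape (x @ Hash # pre ?W i), int (length x + 1 + i), ones 0, 0)
     (Ga0 False False, init_tape (x @ Hash # pre ?W (Suc i)), int (length x + 1 + Suc i), ones 0, 0)
     (9 * (length x + 3 + i) ^ 2)"
    using it unfolding e1 e2 e3 e4 .
  have mono: "i * (9 * (length x + 3 + i) ^ 2) + 9 * (length x + 3 + i) ^ 2 \<le> Suc i * (9 * (length x + 3 + Suc i) ^ 2)"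
  proof -
    have h: "(length x + 3 + i) ^ 2 \<le> (length x + 3 + Suc i) ^ 2" by (rule power_mono) simp_all
    have "i * (9 * (length x + 3 + i) ^ 2) + 9 * (length x + 3 + i) ^ 2 = Suc i * (9 * (length x + 3 + i) ^ 2)" by simp
    also have "\<dots> \<le> Suc i * (9 * (length x + 3 + Suc i) ^ 2)" by (rule mult_le_mono2, rule mult_le_mono2, rule h)
    finally show ?thesis .
  qed
  show ?case using reach_trans[OF IH it'] mono by (rule reach_mono)
qed

lemma copyw:
  assumes bl: "Blank \<notin> set w" and j: "j \<le> length w"
  shows "reach Or mm (Fc, init_tape w, 0, ones 0, 0) (Fc, init_tape w, int j, init_tape (take j w), int j) j"
  using j
proof (induction j)
  case 0
  have "ones 0 = init_tape []" by (rule ext) (simp add: ones_def init_tape_def)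
  then show ?case by (simp add: reach_refl)
next
  case (Suc j)
  then have IH: "reach Or mm (Fc, init_tape w, 0, ones 0, 0) (Fc, init_tape w, int j, init_tape (take j w), int j) j" by simp
  have lt: "j < length w" using Suc.prems by simp
  have ne: "w ! j \<noteq> Blank" using bl lt nth_mem by fastforce
  have q: "(init_tape (take j w))(int j := w ! j) = init_tape (take (Suc j) w)"
    using it_app[of "take j w" "w ! j"] lt by (simp add: take_Suc_conv_app_nth)
  have "stp Or mm (Fc, init_tape w, int j, init_tape (take j w), int j) = (Fc, init_tape w, int (Suc j), init_tape (take (Suc j) w), int (Suc j))"
    using ne it_in[OF lt] q by (simp add: stp.simps)
  from reach_trans[OF IH reach_step1[OF this]] show ?case by simp
qed

lemma final_phase:
  assumes bl: "Blank \<notin> set w"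
  shows "\<exists>r. reach Or mm (Fa0, init_tape w, int (length w), ones 0, 0) r (2 * length w + 4) \<and> stopd mm r = Some (w \<in> Or 0)"
proof -
  let ?L = "length w"
  have a: "stp Or mm (Fa0, init_tape w, int ?L, ones 0, 0) = (Fa, init_tape w, int ?L - 1, ones 0, 0)"
    by (simp add: stp.simps)
  have g: "reach Or mm (Fa, init_tape w, int ?L - 1, ones 0, 0) (Fa, init_tape w, -1, ones 0, 0) ?L"
    by (rule goleftk[OF bl]) simp_all
  have c: "stp Or mm (Fa, init_tape w, -1, ones 0, 0) = (Fc, init_tape w, 0, ones 0, 0)"
    by (simp add: stp.simps it_neg)
  have d: "reach Or mm (Fc, init_tape w, 0, ones 0, 0) (Fc, init_tape w, int ?L, init_tape w, int ?L) ?L"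
    using copyw[OF bl, of ?L] by simp
  have cw: "content (init_tape w) = w" using bl by (simp add: content_init nonblank_def)
  let ?r = "(if w \<in> Or 0 then Yes else No, init_tape w, int ?L, (\<lambda>_. Blank), 0::int)"
  have f: "stp Or mm (Fc, init_tape w, int ?L, init_tape w, int ?L) = ?r"
    using it_end[of w] cw by (simp add: stp.simps)
  have "reach Or mm (Fa0, init_tape w, int ?L, ones 0, 0) ?r (Suc (?L + Suc (?L + 1)))"
    using reach_step[OF a reach_trans[OF g reach_step[OF c reach_trans[OF d reach_step1[OF f]]]]] .
  moreover have "stopd mm ?r = Some (w \<in> Or 0)" by simp
  ultimately show ?thesis by (intro exI[of _ ?r]) (auto intro: reach_mono)
qed


lemma hash_split: "Hash \<notin> set x \<Longrightarrow> Hash \<notin> set y \<Longrightarrow> x @ Hash # u = y @ Hash # v \<Longrightarrow> x = y"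
proof (induction x arbitrary: y)
  case Nil then show ?case by (cases y) auto
next
  case (Cons c x) then show ?case by (cases y) auto
qed

lemma tape_blank:
  "int n + int t \<le> p \<Longrightarrow> work_tape ((step Or M ^^ t) (q0, init_tape (replicate n S1), 0, t2, h2)) p = Blank"
proof (induction t arbitrary: p)
  case 0 then show ?case by (simp add: init_tape_def)
next
  case (Suc t)
  let ?c0 = "(q0, init_tape (replicate n S1), 0::int, t2, h2)"
  obtain q t1 h1 u2 g2 where ct: "(step Or M ^^ t) ?c0 = (q, t1, h1, u2, g2)" by (cases "(step Or M ^^ t) ?c0") auto
  have hb: "\<bar>h1\<bar> \<le> int t" using hd_pow[where Or = Or and M = M and t = t and c = ?c0] ct by simp
  have old: "t1 p = Blank" using Suc.IH[of p] Suc.prems ct by simp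
  have ne: "p \<noteq> h1" using hb Suc.prems by simp
  show ?case
  proof (cases "M q (t1 h1) (u2 g2)")
    case (Move q' s1 d1 s2 d2)
    then show ?thesis using ct old ne by simp
  next
    case (Ask j qy qn)
    then show ?thesis using ct old by simp
  next
    case (Stop b)
    then show ?thesis using ct old by simp
  qed
qed

lemma Wf_blank: "int n + int (tsM Or M n) \<le> p \<Longrightarrow> WfM Or M n p = Blank"
  unfolding WfM_def run_def by (rule tape_blank)

lemma main_bound:
  fixes n i T k :: nat
  assumes i: "i \<le> n + T" and T: "T \<le> (n + 2) ^ k"
  shows "n + 1 + i * (9 * (n + 3 + i) ^ 2) + 9 * (n + 3 + i) ^ 2 + (2 * (n + 1 + i) + 4) \<le> (n + 2) ^ (12 * k + 12)"
proof -
  define X where "X = n + 2"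
  define Y where "Y = X ^ (k + 1)"
  define A where "A = n + 3 + i"
  have X2: "2 \<le> X" unfolding X_def by simp
  have Xk: "1 \<le> X ^ k" using X2 by simp
  have Y: "Y = X * X ^ k" unfolding Y_def by simp
  have Y2: "2 \<le> Y" unfolding Y using mult_le_mono[OF X2 Xk] by simp
  have A3: "3 \<le> A" unfolding A_def by simp
  have AY: "A \<le> 3 * Y"
  proof -
    have "A \<le> 2 * n + 3 + X ^ k" unfolding A_def using i T X_def by simp
    also have "\<dots> \<le> 3 * n * X ^ k + 6 * X ^ k"
    proof -
      have h: "n * 1 \<le> n * X ^ k" by (rule mult_le_mono2[OF Xk])
      have "2 * n \<le> 3 * (n * 1)" by simp
      also have "\<dots> \<le> 3 * (n * X ^ k)" using h by (rule mult_le_mono2)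
      finally have a: "2 * n \<le> 3 * n * X ^ k" by (simp add: mult.assoc)
      have b: "3 + X ^ k \<le> 6 * X ^ k" using Xk by simp
      have "2 * n + (3 + X ^ k) \<le> 3 * n * X ^ k + 6 * X ^ k" by (rule add_mono[OF a b])
      then show ?thesis by (simp only: add.assoc)
    qed
    also have "\<dots> = 3 * Y" unfolding Y X_def by (simp add: algebra_simps)
    finally show ?thesis .
  qed
  have lhs: "n + 1 + i * (9 * A ^ 2) + 9 * A ^ 2 + (2 * (n + 1 + i) + 4) \<le> 9 * A ^ 3 + 9 * A ^ 2 + 3 * A + 5"
  proof -
    have "i * (9 * A ^ 2) \<le> A * (9 * A ^ 2)" unfolding A_def by (rule mult_le_mono1) simp
    then show ?thesis unfolding A_def by (simp add: power2_eq_square power3_eq_cube algebra_simps)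
  qed
  have t1: "9 * A ^ 2 \<le> 3 * A ^ 3"
  proof -
    have "9 * A ^ 2 = 3 * (3 * A ^ 2)" by simp
    also have "\<dots> \<le> 3 * (A * A ^ 2)" using A3 by (intro mult_le_mono2 mult_le_mono1)
    finally show ?thesis by (simp add: power2_eq_square power3_eq_cube)
  qed
  have t2: "3 * A \<le> A ^ 3"
  proof -
    have "3 * A \<le> A * A" using A3 by (rule mult_le_mono1)
    also have "\<dots> \<le> A * A * A" using A3 by simp
    finally show ?thesis by (simp add: power3_eq_cube)
  qed
  have t3: "5 \<le> A ^ 3"
  proof -
    have "3 ^ 3 \<le> A ^ 3" using A3 by (rule power_mono) simp
    then show ?thesis by simp
  qed
  have "n + 1 + i * (9 * A ^ 2) + 9 * A ^ 2 + (2 * (n + 1 + i) + 4) \<le> 14 * A ^ 3"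
    using lhs t1 t2 t3 by simp
  also have "\<dots> \<le> 14 * (3 * Y) ^ 3" using AY by (intro mult_le_mono2 power_mono) simp_all
  also have "\<dots> = 378 * Y ^ 3" by (simp add: power_mult_distrib)
  also have "\<dots> \<le> Y ^ 9 * Y ^ 3"
  proof -
    have "(378::nat) \<le> 2 ^ 9" by simp
    also have "(2::nat) ^ 9 \<le> Y ^ 9" using Y2 by (rule power_mono) simp
    finally show ?thesis by (rule mult_le_mono1)
  qed
  also have "\<dots> = X ^ (12 * k + 12)" unfolding Y_def by (simp add: power_add[symmetric] power_mult[symmetric] algebra_simps)
  finally show ?thesis unfolding A_def X_def .
qed


theorem main_dec:
  fixes L :: lang
  assumes Lbin: "\<forall>x\<in>L. binary x" and wf: "wf_otm NM M" and adv: "computes_advice_in Or M k a"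
    and O1: "Oq 1 = LFL Or M" and O0: "Oq 0 = {x @ Hash # a (length x) | x. x \<in> L}"
    and xnb: "nonblank x"
  shows "\<exists>r. reach Oq mm (initc Bc x) r ((length x + 2) ^ (12 * k + 12)) \<and> stopd mm r = Some (x \<in> L)"
proof (cases "set x \<subseteq> {S0, S1}")
  case True
  note xb = True
  let ?n = "length x"
  let ?W = "WfM Or M ?n"
  let ?T = "tsM Or M ?n"
  define i where "i = (LEAST j. ?W (int j) = Blank)"
  have ex: "?W (int (?n + ?T)) = Blank" by (rule Wf_blank) simp
  have iW: "?W (int i) = Blank" unfolding i_def by (rule LeastI[of "\<lambda>j. ?W (int j) = Blank", OF ex])
  have ib: "i \<le> ?n + ?T" unfolding i_def by (rule Least_le[of "\<lambda>j. ?W (int j) = Blank", OF ex])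
  have nb: "\<forall>j<i. ?W (int j) \<noteq> Blank" unfolding i_def using not_less_Least by blast
  have pa: "pre ?W i = a ?n"
    using adv_facts(3)[OF adv, of ?n] unfolding content_def pre_def i_def by simp
  have r1: "reach Oq mm (Bc, init_tape x, 0, (\<lambda>_. Blank), 0) (Bc, init_tape x, 0 + dsg Rgt * int ?n, (\<lambda>_. Blank), 0) ?n"
  proof (rule walk1[where A = "{S0, S1}"])
    fix j assume j: "j < ?n"
    have "x ! j \<in> {S0, S1}" using xb nth_mem[OF j] by blast
    then show "init_tape x (0 + dsg Rgt * int j) \<in> {S0, S1}" using it_in[OF j] by simp
  qed auto
  have s2: "stp Oq mm (Bc, init_tape x, int ?n, (\<lambda>_. Blank), 0) = (Ga0 False False, init_tape (x @ Hash # []), int (?n + 1), ones 0, 0)"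
    using it_end[of x] it_app[of x Hash] by (simp add: stp.simps ones0)
  have r3: "reach Oq mm (Ga0 False False, init_tape (x @ Hash # []), int (?n + 1), ones 0, 0)
     (Ga0 False False, init_tape (x @ Hash # pre ?W i), int (?n + 1 + i), ones 0, 0)
     (i * (9 * (?n + 3 + i) ^ 2))"
    by (rule loop_main[where Oq = Oq and Or = Or and M = M, OF xb O1 nb])
  let ?w = "x @ Hash # pre ?W i"
  have pbl: "Blank \<notin> set (pre ?W i)" using nb unfolding pre_def by auto
  have lp: "length (pre ?W i) = i" unfolding pre_def by simp
  have r4: "reach Oq mm (Ga0 False False, init_tape ?w, int (length ?w), ones 0, 0) (Fa0, init_tape ?w, int (length ?w), ones 0, 0)
     (9 * (length ?w + 2) ^ 2)"
    using iter[where Oq = Oq and Or = Or and M = M, OF xb pbl O1] lp iW by simp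
  have wbl: "Blank \<notin> set ?w" using xb pbl by auto
  obtain r where r5: "reach Oq mm (Fa0, init_tape ?w, int (length ?w), ones 0, 0) r (2 * length ?w + 4)"
      "stopd mm r = Some (?w \<in> Oq 0)"
    using final_phase[OF wbl] by blast
  have lw: "length ?w = ?n + 1 + i" using lp by simp
  have mem: "(?w \<in> Oq 0) = (x \<in> L)"
  proof
    assume "?w \<in> Oq 0"
    then have "\<exists>y. ?w = y @ Hash # a (length y) \<and> y \<in> L" unfolding O0 mem_Collect_eq .
    then obtain y where y: "y \<in> L" "y @ Hash # a (length y) = ?w" by metis
    have "Hash \<notin> set y" using Lbin y(1) unfolding binary_def by auto
    moreover have "Hash \<notin> set x" using xb by auto
    ultimately have "y = x" using hash_split y(2) by blast
    then show "x \<in> L" using y(1) by simp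
  next
    assume "x \<in> L"
    then show "?w \<in> Oq 0" unfolding O0 pa by blast
  qed
  have all: "reach Oq mm (initc Bc x) r
     (?n + Suc (i * (9 * (?n + 3 + i) ^ 2) + (9 * (?n + 3 + i) ^ 2) + (2 * (?n + 1 + i) + 4)))"
  proof -
    have eqb: "?n + 1 + i + 2 = ?n + 3 + i" by simp
    have e0: "0 + dsg Rgt * int ?n = int ?n" by simp
    have "reach Oq mm (initc Bc x) r
     (?n + Suc (i * (9 * (?n + 3 + i) ^ 2) + (9 * (length ?w + 2) ^ 2) + (2 * length ?w + 4)))"
      unfolding initc_def
      using reach_trans[OF r1[unfolded e0] reach_step[OF s2 reach_trans[OF reach_trans[OF r3[unfolded lw[symmetric]] r4] r5(1)]]] .
    then show ?thesis unfolding lw eqb .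
  qed
  have "?n + Suc (i * (9 * (?n + 3 + i) ^ 2) + (9 * (?n + 3 + i) ^ 2) + (2 * (?n + 1 + i) + 4))
      \<le> (?n + 2) ^ (12 * k + 12)"
    using main_bound[OF ib adv_facts(1)[OF adv, of ?n]] by (simp add: algebra_simps)
  then have "reach Oq mm (initc Bc x) r ((?n + 2) ^ (12 * k + 12))" by (rule reach_mono[OF all])
  moreover have "stopd mm r = Some (x \<in> L)" using r5(2) mem by simp
  ultimately show ?thesis by blast
next
  case False
  let ?n = "length x"
  have "\<exists>c0. c0 < ?n \<and> x ! c0 \<notin> {S0, S1}"
  proof (rule ccontr)
    assume "\<not> (\<exists>c0. c0 < ?n \<and> x ! c0 \<notin> {S0, S1})"
    then have "set x \<subseteq> {S0, S1}" by (auto simp: in_set_conv_nth)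
    then show False using False by simp
  qed
  then obtain c0 where c0: "c0 < ?n" "x ! c0 \<notin> {S0, S1}" by blast
  define c where "c = (LEAST c. c < ?n \<and> x ! c \<notin> {S0, S1})"
  have c: "c < ?n" "x ! c \<notin> {S0, S1}" unfolding c_def
    using LeastI[of "\<lambda>c. c < ?n \<and> x ! c \<notin> {S0, S1}" c0] c0 by auto
  have pre: "\<forall>j<c. x ! j \<in> {S0, S1}"
  proof (intro allI impI)
    fix j assume "j < c"
    then show "x ! j \<in> {S0, S1}" using not_less_Least[of j "\<lambda>c. c < ?n \<and> x ! c \<notin> {S0, S1}"] c(1) unfolding c_def[symmetric] by auto
  qed
  have r1: "reach Oq mm (Bc, init_tape x, 0, (\<lambda>_. Blank), 0) (Bc, init_tape x, 0 + dsg Rgt * int c, (\<lambda>_. Blank), 0) c"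
  proof (rule walk1[where A = "{S0, S1}"])
    fix j assume j: "j < c"
    then have j': "j < ?n" using c by simp
    show "init_tape x (0 + dsg Rgt * int j) \<in> {S0, S1}" using pre j it_in[OF j'] by auto
  qed auto
  have xc: "x ! c \<noteq> Blank" using xnb c(1) nth_mem unfolding nonblank_def by fastforce
  have h: "x ! c = Hash" using xc c(2) by (cases "x ! c") auto
  have st: "stopd mm (Bc, init_tape x, int c, (\<lambda>_. Blank), 0) = Some False"
    using h it_in[OF c(1)] by simp
  have notin: "x \<notin> L" using Lbin False unfolding binary_def by auto
  have "c \<le> (?n + 2) ^ (12 * k + 12)"
  proof -
    have "c \<le> ?n + 2" using c by simp
    also have "\<dots> \<le> (?n + 2) ^ (12 * k + 12)" by (rule self_le_power) simp_all
    finally show ?thesis .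
  qed
  then show ?thesis using reach_mono[OF r1] st notin unfolding initc_def by (intro exI[of _ "(Bc, init_tape x, int c, (\<lambda>_. Blank), 0)"]) auto
qed

lemma sym4: "s \<noteq> Blank \<Longrightarrow> s \<noteq> S0 \<Longrightarrow> s \<noteq> Hash \<Longrightarrow> s = S1"
  by (cases s) auto

lemma fin_ms: "finite (UNIV :: ms set)"
proof -
  let ?S = "{Blank, S0, S1, Hash}"
  let ?A = "{Bc, Fa0, Fa, Fc, Yes, No} \<union> (\<lambda>(b, e). Ga0 b e) ` UNIV \<union> (\<lambda>(b, e). Ga b e) ` UNIV
     \<union> (\<lambda>(b, e). Xw b e) ` UNIV \<union> (\<lambda>(b, e). Xw2 b e) ` UNIV \<union> (\<lambda>(b, e). Gb b e) ` UNIV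
     \<union> (\<lambda>(b, e). Ou b e) ` UNIV \<union> (\<lambda>(b, e). Dc b e) ` UNIV \<union> Qa ` UNIV
     \<union> (\<lambda>(s, b, e). Iw s b e) ` (?S \<times> UNIV) \<union> (\<lambda>(s, b, e). Iw2 s b e) ` (?S \<times> UNIV)
     \<union> (\<lambda>(s, b, e). Kw s b e) ` (?S \<times> UNIV)"
  have sS: "s \<in> ?S" for s by (cases s) auto
  have "UNIV \<subseteq> ?A"
  proof
    fix m :: ms
    show "m \<in> ?A" by (cases m) (auto simp: image_iff intro: sym4)
  qed
  moreover have "finite ?A" by simp
  ultimately show ?thesis by (rule finite_subset)
qed

theorem lemma2:
  fixes B C :: "lang set"
  shows "Cpoly C B \<subseteq> P_rel2 C (Unary (P_rel B))"
proof
  fix L assume "L \<in> Cpoly C B"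
  then obtain a LB M N k where Lbin: "\<forall>x\<in>L. binary x" and LB: "LB \<in> B" and wf: "wf_otm N M"
      and adv: "computes_advice_in (\<lambda>_. LB) M k a" and LE: "{x @ Hash # a (length x) | x. x \<in> L} \<in> C"
    unfolding Cpoly_def by blast
  let ?Or = "\<lambda>_::nat. LB"
  let ?LF = "LFL ?Or M"
  let ?LE = "{x @ Hash # a (length x) | x. x \<in> L}"
  have LFP: "P_oracle ?Or ?LF" by (rule LF_in_P[OF wf adv])
  have LFU: "?LF \<in> Unary (P_rel B)"
    unfolding Unary_def P_rel_def LFL_def using LFP LB unfolding LFL_def by blast
  let ?Oq = "\<lambda>j::nat. if j = 0 then ?LE else if j = 1 then ?LF else {}"
  have "\<exists>Mn Nn. wf_otm Nn Mn \<and> decides_in ?Oq Mn (12 * k + 12) L"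
  proof (rule P_from_dt[where V = UNIV and sA = Bc and M = mm])
    show "finite (UNIV :: ms set)" by (rule fin_ms)
  next
    show "\<forall>x. nonblank x \<longrightarrow> (\<exists>r. reach ?Oq mm (initc Bc x) r ((length x + 2) ^ (12 * k + 12)) \<and> stopd mm r = Some (x \<in> L))"
      using main_dec[OF Lbin wf adv, where Oq = ?Oq] by simp
  qed auto
  moreover have "\<forall>w\<in>L. nonblank w" using Lbin unfolding binary_def nonblank_def by auto
  ultimately have "P_oracle ?Oq L" unfolding P_oracle_def by blast
  then show "L \<in> P_rel2 C (Unary (P_rel B))"
    unfolding P_rel2_def using LE LFU by blast
qed


end
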